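(* Let $X$ be compact Hausdorff, $\mu$ a probability Radon measure on $X$, $(H,e)$ a unital Hilbert space with hermitian basis $F\ni e$, and let $k=\{k_f:f\in F\}$ be a unital $H$-support in $(L^2(X,\mu),1)$ consisting of real-valued functions with $k_e\ge0$ a.e. and $\sum_{f\neq e}k_f^2\le k_e^2$ a.e. Let $T_k:L^2(X,\mu)\to H$, $T_k\eta=\sum_f(\eta,k_f)f$, and $T=T_k\circ\iota:C(X)\to H$ with $\iota$ the canonical map. Then $T^{(n)}(M_n(C(X))_+)\subseteq\max\mathfrak c_e$ for all $n$ (so $T$ is a matrix positive map from $C(X)$ to $(H,\max\mathfrak c_e)$), $T$ is unital positive and a nuclear operator, and its $H$-support on $X$ is taken with respect to $\mu'=k_e\mu$ and given by $k'_e=1$, $k'_f=k_f/k_e$ for $f\neq e$.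
   Context: A Hilbert $*$-space is a complex Hilbert space (inner product linear in the first variable) with a conjugate-linear $\zeta\mapsto\zeta^*$, $\zeta^{**}=\zeta$, $(\zeta^*,\eta^* )=\overline{(\zeta,\eta)}$. A unital Hilbert space $(K,u)$ has a fixed hermitian unit vector $u$ and cone $\mathfrak c_u=\{\eta\in K_h:\|\eta\|\le\sqrt2(\eta,u)\}$; $L^2(X,\mu)$ is a unital Hilbert space with involution complex conjugation and unit $1$. An $H$-support in $(K,u)$ is a bounded family $\{k_f\}\subseteq K_h$ with $k_e\in\mathfrak c_u$ and $\sum_{f\ne e}(\eta,k_f)^2\le(\eta,k_e)^2$ for $\eta\in\mathfrak c_u$; unital if $(k_e,u)=1$, $(k_f,u)=0$ for $f\ne e$. An $H$-support on $X$ w.r.t. a probability measure $\nu$: real Borel functions $\{k_f\}$ with $|k_f|\le1$ $\nu$-a.e., $k_e=1$, $\int k_fd\nu=0$ ($f\ne e$), $\sum_{f\ne e}(\int vk_fd\nu)^2\le(\int vd\nu)^2$ for $v\in C(X)_+$; a unital positive map $S:C(X)\to H$ ($S1=e$, $S(C(X)_+)\subseteq\mathfrak c_e$) is written $Sv=\sum_f(\int vk_fd\nu)f$. $M_n(C(X))_+$: matrices of continuous functions positive semidefinite at each point; $T^{(n)}[v_{ij}]=[Tv_{ij}]$. $\max\mathfrak c_e$: with $\overline H$ the conjugate space and $\mathfrak c_e^\boxdot=\{\bar\eta\in M_n(\overline H)_h:[(\xi,\eta_{st})]\ge0\ \forall\xi\in\mathfrak c_e\}$, $\max\mathfrak c_e\cap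 M_n(H)=\{\zeta\in M_n(H)_h:[(\zeta_{ik},\eta_{jl})]_{(i,j),(k,l)}\ge0\ \forall\bar\eta\in\mathfrak c_e^\boxdot\}$, where matrices carry the involution $[x_{ij}]^*=[x_{ji}^*]$. *)

theory Defs
  imports "HOL-Probability.Probability"
begin

section \<open>The unital Hilbert space (H,e) with hermitian orthonormal basis F, modelled as l2(F)\<close>

definition l2 :: "('f \<Rightarrow> complex) set" where
  "l2 = {x. (\<lambda>f. (cmod (x f))\<^sup>2) summable_on UNIV}"

definition l2_inner :: "('f \<Rightarrow> complex) \<Rightarrow> ('f \<Rightarrow> complex) \<Rightarrow> complex" where
  "l2_inner x y = infsum (\<lambda>f. x f * cnj (y f)) UNIV"

definition l2_norm :: "('f \<Rightarrow> complex) \<Rightarrow> real" where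
  "l2_norm x = sqrt (infsum (\<lambda>f. (cmod (x f))\<^sup>2) UNIV)"

text \<open>involution: coordinatewise conjugation w.r.t. the hermitian basis\<close>
definition l2_star :: "('f \<Rightarrow> complex) \<Rightarrow> ('f \<Rightarrow> complex)" where
  "l2_star x = (\<lambda>f. cnj (x f))"

definition basis_vec :: "'f \<Rightarrow> ('f \<Rightarrow> complex)" where
  "basis_vec u = (\<lambda>f. if f = u then 1 else 0)"

definition herm_cone :: "'f \<Rightarrow> ('f \<Rightarrow> complex) set" where
  "herm_cone u = {\<eta> \<in> l2. l2_star \<eta> = \<eta> \<and>
      l2_norm \<eta> \<le> sqrt 2 * Re (l2_inner \<eta> (basis_vec u))}"

definition psd_on :: "'i set \<Rightarrow> ('i \<Rightarrow> 'i \<Rightarrow> complex) \<Rightarrow> bool" where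
  "psd_on I A \<longleftrightarrow> (\<forall>x :: 'i \<Rightarrow> complex.
      Im (\<Sum>p\<in>I. \<Sum>q\<in>I. cnj (x p) * A p q * x q) = 0 \<and>
      Re (\<Sum>p\<in>I. \<Sum>q\<in>I. cnj (x p) * A p q * x q) \<ge> 0)"

text \<open>An m x m matrix eta (entries given as vectors of H, i.e. the elements of the conjugate
  space) that is hermitian and satisfies [(xi, eta_st)] >= 0 for all xi in c_e.\<close>
definition boxdot_cone :: "'f \<Rightarrow> nat \<Rightarrow> (nat \<Rightarrow> nat \<Rightarrow> ('f \<Rightarrow> complex)) \<Rightarrow> bool" where
  "boxdot_cone u m \<eta> \<longleftrightarrow>
     (\<forall>s<m. \<forall>t<m. \<eta> s t \<in> l2 \<and> \<eta> s t = l2_star (\<eta> t s)) \<and>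
     (\<forall>\<xi>\<in>herm_cone u. psd_on {..<m} (\<lambda>s t. l2_inner \<xi> (\<eta> s t)))"

definition max_cone :: "'f \<Rightarrow> nat \<Rightarrow> (nat \<Rightarrow> nat \<Rightarrow> ('f \<Rightarrow> complex)) \<Rightarrow> bool" where
  "max_cone u n \<zeta> \<longleftrightarrow>
     (\<forall>i<n. \<forall>k<n. \<zeta> i k \<in> l2 \<and> \<zeta> i k = l2_star (\<zeta> k i)) \<and>
     (\<forall>m \<eta>. boxdot_cone u m \<eta> \<longrightarrow>
        psd_on ({..<n} \<times> {..<m}) (\<lambda>(i,j) (k,l). l2_inner (\<zeta> i k) (\<eta> j l)))"

definition radon_prob :: "'a::topological_space measure \<Rightarrow> bool" where
  "radon_prob M \<longleftrightarrow> prob_space M \<and> sets M = sets borel \<and>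
     (\<forall>A\<in>sets borel. emeasure M A = (INF U\<in>{U. open U \<and> A \<subseteq> U}. emeasure M U)) \<and>
     (\<forall>U. open U \<longrightarrow> emeasure M U = (SUP K\<in>{K. compact K \<and> K \<subseteq> U}. emeasure M K))"

text \<open>hermitian elements of L2(X,mu), represented by real-valued square integrable functions\<close>
definition L2r :: "'a measure \<Rightarrow> ('a \<Rightarrow> real) \<Rightarrow> bool" where
  "L2r M g \<longleftrightarrow> g \<in> borel_measurable M \<and> integrable M (\<lambda>x. (g x)\<^sup>2)"

definition L2_norm :: "'a measure \<Rightarrow> ('a \<Rightarrow> real) \<Rightarrow> real" where
  "L2_norm M g = sqrt (\<integral>x. (g x)\<^sup>2 \<partial>M)"

definition L2_cone :: "'a measure \<Rightarrow> ('a \<Rightarrow> real) set" where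
  "L2_cone M = {\<eta>. L2r M \<eta> \<and> L2_norm M \<eta> \<le> sqrt 2 * (\<integral>x. \<eta> x \<partial>M)}"

definition unital_H_support_L2 :: "'a measure \<Rightarrow> 'f \<Rightarrow> ('f \<Rightarrow> 'a \<Rightarrow> real) \<Rightarrow> bool" where
  "unital_H_support_L2 M e k \<longleftrightarrow>
     (\<forall>f. L2r M (k f)) \<and> (\<exists>B. \<forall>f. L2_norm M (k f) \<le> B) \<and>
     k e \<in> L2_cone M \<and>
     (\<forall>\<eta>\<in>L2_cone M.
        (\<lambda>f. (\<integral>x. \<eta> x * k f x \<partial>M)\<^sup>2) summable_on (UNIV - {e}) \<and>
        infsum (\<lambda>f. (\<integral>x. \<eta> x * k f x \<partial>M)\<^sup>2) (UNIV - {e}) \<le> (\<integral>x. \<eta> x * k e x \<partial>M)\<^sup>2) \<and>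
     (\<integral>x. k e x \<partial>M) = 1 \<and> (\<forall>f. f \<noteq> e \<longrightarrow> (\<integral>x. k f x \<partial>M) = 0)"

definition Tk :: "'a measure \<Rightarrow> ('f \<Rightarrow> 'a \<Rightarrow> real) \<Rightarrow> ('a \<Rightarrow> complex) \<Rightarrow> ('f \<Rightarrow> complex)" where
  "Tk M k \<eta> = (\<lambda>f. \<integral>x. \<eta> x * complex_of_real (k f x) \<partial>M)"

definition H_support_on_X :: "'a::topological_space measure \<Rightarrow> 'f \<Rightarrow> ('f \<Rightarrow> 'a \<Rightarrow> real) \<Rightarrow> bool" where
  "H_support_on_X \<nu> e k \<longleftrightarrow>
     (\<forall>f. k f \<in> borel_measurable \<nu>) \<and>
     (\<forall>f. AE x in \<nu>. \<bar>k f x\<bar> \<le> 1) \<and>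
     k e = (\<lambda>_. 1) \<and>
     (\<forall>f. f \<noteq> e \<longrightarrow> (\<integral>x. k f x \<partial>\<nu>) = 0) \<and>
     (\<forall>v. continuous_on UNIV v \<and> (\<forall>x. v x \<ge> 0) \<longrightarrow>
        (\<lambda>f. (\<integral>x. v x * k f x \<partial>\<nu>)\<^sup>2) summable_on (UNIV - {e}) \<and>
        infsum (\<lambda>f. (\<integral>x. v x * k f x \<partial>\<nu>)\<^sup>2) (UNIV - {e}) \<le> (\<integral>x. v x \<partial>\<nu>)\<^sup>2)"

definition sup_norm :: "('a \<Rightarrow> complex) \<Rightarrow> real" where
  "sup_norm v = (SUP x. cmod (v x))"

definition nuclear_CX :: "(('a::topological_space \<Rightarrow> complex) \<Rightarrow> ('f \<Rightarrow> complex)) \<Rightarrow> bool" where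
  "nuclear_CX T \<longleftrightarrow>
     (\<forall>v. continuous_on UNIV v \<longrightarrow> T v \<in> l2) \<and>
     (\<exists>(\<phi> :: nat \<Rightarrow> ('a \<Rightarrow> complex) \<Rightarrow> complex) (y :: nat \<Rightarrow> ('f \<Rightarrow> complex)) (c :: nat \<Rightarrow> real).
        (\<forall>n v w a. continuous_on UNIV v \<and> continuous_on UNIV w \<longrightarrow>
            \<phi> n (\<lambda>x. a * v x + w x) = a * \<phi> n v + \<phi> n w) \<and>
        (\<forall>n v. continuous_on UNIV v \<longrightarrow> cmod (\<phi> n v) \<le> c n * sup_norm v) \<and>
        (\<forall>n. c n \<ge> 0 \<and> y n \<in> l2) \<and>
        summable (\<lambda>n. c n * l2_norm (y n)) \<and>
        (\<forall>v. continuous_on UNIV v \<longrightarrow>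
            (\<lambda>N. l2_norm (\<lambda>f. T v f - (\<Sum>n<N. \<phi> n v * y n f))) \<longlonglongrightarrow> 0))"

end

theory Submission
  imports Defs
begin

definition qf :: "'i set \<Rightarrow> ('i \<Rightarrow> 'i \<Rightarrow> complex) \<Rightarrow> ('i \<Rightarrow> complex) \<Rightarrow> complex" where
  "qf I P x = (\<Sum>a\<in>I. \<Sum>b\<in>I. cnj (x a) * P a b * x b)"

lemma psd_on_qf: "psd_on I P \<longleftrightarrow> (\<forall>x. Im (qf I P x) = 0 \<and> Re (qf I P x) \<ge> 0)"
  unfolding psd_on_def qf_def by simp

lemma qf_restrict:
  assumes "finite I" "T \<subseteq> I" "\<And>c. c \<in> I \<Longrightarrow> c \<notin> T \<Longrightarrow> x c = 0"
  shows "qf I P x = qf T P x"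
proof -
  have "qf I P x = (\<Sum>a\<in>T. \<Sum>b\<in>I. cnj (x a) * P a b * x b)"
    unfolding qf_def by (rule sum.mono_neutral_right) (use assms in \<open>auto intro: finite_subset\<close>)
  also have "\<dots> = (\<Sum>a\<in>T. \<Sum>b\<in>T. cnj (x a) * P a b * x b)"
    by (rule sum.cong[OF refl], rule sum.mono_neutral_right) (use assms in \<open>auto intro: finite_subset\<close>)
  finally show ?thesis unfolding qf_def .
qed

lemma psd_diag:
  assumes "psd_on I P" "finite I" "a \<in> I"
  shows "Im (P a a) = 0" "Re (P a a) \<ge> 0"
proof -
  define x where "x = (\<lambda>c. if c = a then 1 else (0::complex))"
  have "qf I P x = qf {a} P x" by (rule qf_restrict) (use assms in \<open>auto simp: x_def\<close>)
  also have "\<dots> = P a a" by (simp add: qf_def x_def)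
  finally show "Im (P a a) = 0" "Re (P a a) \<ge> 0" using assms(1) unfolding psd_on_qf by metis+
qed

lemma psd_herm:
  assumes "psd_on I P" "finite I" "a \<in> I" "b \<in> I"
  shows "P b a = cnj (P a b)"
proof (cases "a = b")
  case True
  then show ?thesis using psd_diag[OF assms(1,2,3)] by (simp add: complex_eq_iff)
next
  case False
  define x1 where "x1 = (\<lambda>c. if c = a then 1 else if c = b then 1 else (0::complex))"
  define x2 where "x2 = (\<lambda>c. if c = a then 1 else if c = b then \<i> else (0::complex))"
  have "qf I P x1 = qf {a,b} P x1" by (rule qf_restrict) (use assms in \<open>auto simp: x1_def\<close>)
  also have "\<dots> = P a a + P a b + P b a + P b b" using False by (simp add: qf_def x1_def)
  finally have 1: "Im (P a a + P a b + P b a + P b b) = 0" using assms(1) unfolding psd_on_qf by metis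
  have "qf I P x2 = qf {a,b} P x2" by (rule qf_restrict) (use assms in \<open>auto simp: x2_def\<close>)
  also have "\<dots> = P a a + \<i> * P a b - \<i> * P b a + P b b" using False by (simp add: qf_def x2_def algebra_simps)
  finally have 2: "Im (P a a + \<i> * P a b - \<i> * P b a + P b b) = 0" using assms(1) unfolding psd_on_qf by metis
  have "Im (P a a) = 0" "Im (P b b) = 0" using psd_diag[OF assms(1,2)] assms by auto
  with 1 2 show ?thesis by (simp add: complex_eq_iff)
qed

lemma qf_cong: "(\<And>c. c \<in> I \<Longrightarrow> x c = y c) \<Longrightarrow> qf I P x = qf I P y"
  unfolding qf_def by (intro sum.cong refl) auto

lemma psd_on_subset:
  assumes "psd_on (insert p I) P" "p \<notin> I" "finite I"
  shows "psd_on I P"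
  unfolding psd_on_qf
proof
  fix x :: "_ \<Rightarrow> complex"
  define x' where "x' = x(p := 0)"
  have "qf (insert p I) P x' = qf I P x'" by (rule qf_restrict) (use assms in \<open>auto simp: x'_def\<close>)
  also have "\<dots> = qf I P x" by (rule qf_cong) (use assms in \<open>auto simp: x'_def\<close>)
  finally show "Im (qf I P x) = 0 \<and> 0 \<le> Re (qf I P x)" using assms(1) unfolding psd_on_qf by metis
qed

lemma psd_zero_diag_row:
  assumes "psd_on I P" "finite I" "p \<in> I" "q \<in> I" "P p p = 0"
  shows "P q p = 0"
proof (rule ccontr)
  assume ne: "P q p \<noteq> 0"
  then have qp: "q \<noteq> p" using assms by auto
  define t :: real where "t = (\<bar>Re (P q q)\<bar> + 1) / (2 * (cmod (P q p))\<^sup>2)"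
  define x where "x = (\<lambda>c. if c = q then 1 else if c = p then - of_real t * cnj (P q p) else (0::complex))"
  have h: "P p q = cnj (P q p)" using psd_herm[OF assms(1,2,4,3)] .
  have nsq: "P q p * cnj (P q p) = of_real ((cmod (P q p))\<^sup>2)" using complex_norm_square[of "P q p"] by simp
  have "qf I P x = qf {q,p} P x" by (rule qf_restrict) (use assms in \<open>auto simp: x_def\<close>)
  also have "\<dots> = P q q - 2 * of_real t * (P q p * cnj (P q p))"
    using qp assms(5) h by (simp add: qf_def x_def algebra_simps)
  also have "\<dots> = P q q - 2 * of_real t * (of_real ((cmod (P q p))\<^sup>2))" by (simp only: nsq)
  finally have "Re (qf I P x) = Re (P q q) - 2 * t * (cmod (P q p))\<^sup>2" by simp
  also have "\<dots> = Re (P q q) - (\<bar>Re (P q q)\<bar> + 1)" using ne by (simp add: t_def field_simps)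
  also have "\<dots> < 0" by linarith
  finally show False using assms(1) unfolding psd_on_qf by (metis not_less)
qed

lemma psd_decomp:
  assumes "finite I" "psd_on I P"
  shows "\<exists>us. \<forall>a\<in>I. \<forall>b\<in>I. P a b = (\<Sum>u\<leftarrow>us. u a * cnj (u b))"
  using assms
proof (induction I arbitrary: P rule: finite_induct)
  case empty
  then show ?case by auto
next
  case (insert p I)
  have pI: "p \<in> insert p I" by simp
  have fin: "finite (insert p I)" using insert by simp
  have herm: "\<And>a b. a \<in> insert p I \<Longrightarrow> b \<in> insert p I \<Longrightarrow> P b a = cnj (P a b)"
    using psd_herm[OF insert.prems fin] by blast
  define d where "d = Re (P p p)"
  have Pd: "P p p = of_real d" using psd_diag[OF insert.prems fin pI] by (simp add: d_def complex_eq_iff)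
  have d0: "d \<ge> 0" using psd_diag[OF insert.prems fin pI] by (simp add: d_def)
  show ?case
  proof (cases "d = 0")
    case True
    have row: "\<And>q. q \<in> insert p I \<Longrightarrow> P q p = 0"
      using psd_zero_diag_row[OF insert.prems fin pI] Pd True by simp
    have col: "\<And>q. q \<in> insert p I \<Longrightarrow> P p q = 0"
      using row herm pI by (metis complex_cnj_zero)
    obtain us where us: "\<forall>a\<in>I. \<forall>b\<in>I. P a b = (\<Sum>u\<leftarrow>us. u a * cnj (u b))"
      using insert.IH[OF psd_on_subset[OF insert.prems insert.hyps(2,1)]] by blast
    show ?thesis
    proof (intro exI[of _ "map (\<lambda>u. u(p := 0)) us"] ballI)
      fix a b assume a: "a \<in> insert p I" and b: "b \<in> insert p I"
      show "P a b = (\<Sum>u\<leftarrow>map (\<lambda>u. u(p := 0)) us. u a * cnj (u b))"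
      proof (cases "a = p \<or> b = p")
        case True
        then show ?thesis using row col a b by (auto simp: o_def)
      next
        case False
        then have "a \<in> I" "b \<in> I" using a b by auto
        then show ?thesis using us False by (simp add: o_def)
      qed
    qed
  next
    case False
    then have dpos: "d > 0" using d0 by simp
    define u0 where "u0 = (\<lambda>c. P c p / of_real (sqrt d))"
    define P' where "P' = (\<lambda>a b. P a b - u0 a * cnj (u0 b))"
    have psdP': "psd_on I P'"
      unfolding psd_on_qf
    proof
      fix x :: "_ \<Rightarrow> complex"
      define s where "s = (\<Sum>r\<in>I. P p r * x r)"
      define y where "y = x(p := - s / of_real d)"
      have cs: "(\<Sum>a\<in>I. cnj (x a) * P a p) = cnj s"
        unfolding s_def by (simp add: herm[of p] insert.hyps ac_simps)
      have yI: "\<And>a. a \<in> I \<Longrightarrow> y a = x a" using insert.hyps by (auto simp: y_def)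
      have e1: "qf (insert p I) P y = cnj (y p) * P p p * y p + cnj (y p) * (\<Sum>b\<in>I. P p b * x b)
             + (\<Sum>a\<in>I. cnj (x a) * P a p) * y p + qf I P x"
        using insert.hyps unfolding qf_def
        by (simp add: sum.distrib sum_distrib_left sum_distrib_right yI algebra_simps)
      have yp: "y p = - s / of_real d" by (simp add: y_def)
      have dn: "complex_of_real d \<noteq> 0" using dpos by simp
      have e2: "qf (insert p I) P y = qf I P x - cnj s * s / of_real d"
        unfolding e1 cs yp Pd s_def[symmetric] using dn
        by (simp add: field_simps)
      have sq: "complex_of_real (sqrt d) * complex_of_real (sqrt d) = complex_of_real d"
        using dpos by (simp flip: of_real_mult)
      have sqn: "complex_of_real (sqrt d) \<noteq> 0" using dpos by simp
      have pr: "(\<Sum>a\<in>I. cnj (x a) * u0 a) * (\<Sum>b\<in>I. cnj (u0 b) * x b) = (\<Sum>a\<in>I. \<Sum>b\<in>I. cnj (x a) * (u0 a * cnj (u0 b)) * x b)"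
        by (simp add: sum_product ac_simps)
      have e3: "qf I P' x = qf I P x - (\<Sum>a\<in>I. cnj (x a) * u0 a) * (\<Sum>b\<in>I. cnj (u0 b) * x b)"
        unfolding qf_def P'_def pr by (simp add: right_diff_distrib left_diff_distrib sum_subtractf)
      have e4: "(\<Sum>a\<in>I. cnj (x a) * u0 a) = cnj s / of_real (sqrt d)"
        unfolding u0_def cs[symmetric] by (simp add: sum_divide_distrib)
      have cu: "\<And>b. b \<in> I \<Longrightarrow> cnj (u0 b) = P p b / of_real (sqrt d)"
        using herm[of b p for b] pI by (simp add: u0_def)
      have e5: "(\<Sum>b\<in>I. cnj (u0 b) * x b) = s / of_real (sqrt d)"
        unfolding s_def sum_divide_distrib by (rule sum.cong) (auto simp: cu)
      have eq: "qf I P' x = qf (insert p I) P y"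
        unfolding e2 e3 e4 e5 using sq sqn dn by (simp add: divide_simps)
      then show "Im (qf I P' x) = 0 \<and> 0 \<le> Re (qf I P' x)"
        using insert.prems[unfolded psd_on_qf, rule_format, of y] eq by simp
    qed
    obtain us where us: "\<forall>a\<in>I. \<forall>b\<in>I. P' a b = (\<Sum>u\<leftarrow>us. u a * cnj (u b))"
      using insert.IH[OF psdP'] by blast
    have sq: "complex_of_real (sqrt d) * complex_of_real (sqrt d) = complex_of_real d"
      using dpos by (simp flip: of_real_mult)
    have sqn: "complex_of_real (sqrt d) \<noteq> 0" using dpos by simp
    show ?thesis
    proof (intro exI[of _ "u0 # map (\<lambda>u. u(p := 0)) us"] ballI)
      fix a b assume a: "a \<in> insert p I" and b: "b \<in> insert p I"
      have hab: "P b a = cnj (P a b)" using herm a b by blast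
      have hap: "P p a = cnj (P a p)" using herm a pI by blast
      have hbp: "P p b = cnj (P b p)" using herm b pI by blast
      show "P a b = (\<Sum>u\<leftarrow>u0 # map (\<lambda>u. u(p := 0)) us. u a * cnj (u b))"
      proof (cases "a = p \<or> b = p")
        case True
        then show ?thesis
        proof
          assume ap: "a = p"
          have "u0 p * cnj (u0 b) = P p b"
          proof (cases "b = p")
            case True then show ?thesis using sq sqn Pd ap by (simp add: u0_def divide_simps)
          next
            case False then have "b \<in> I" using b by auto
            then show ?thesis using sq sqn Pd hbp by (simp add: u0_def divide_simps)
          qed
          then show ?thesis using ap by (simp add: o_def)
        next
          assume bp: "b = p"
          have "u0 a * cnj (u0 p) = P a p"
            using sq sqn Pd by (simp add: u0_def divide_simps)
          then show ?thesis using bp by (simp add: o_def)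
        qed
      next
        case False
        then have "a \<in> I" "b \<in> I" using a b by auto
        then show ?thesis using us False unfolding P'_def by (simp add: o_def diff_eq_eq ac_simps)
      qed
    qed
  qed
qed

lemma kron_single:
  fixes u :: "'i \<Rightarrow> complex" and Q :: "'j \<Rightarrow> 'j \<Rightarrow> complex"
  shows "qf (I \<times> J) (\<lambda>(i,j) (k,l). u i * cnj (u k) * Q j l) z
       = qf J Q (\<lambda>l. \<Sum>k\<in>I. cnj (u k) * z (k,l))"
proof -
  define g where "g = (\<lambda>i j k l. cnj (z (i,j)) * (u i * cnj (u k) * Q j l) * z (k,l))"
  have "qf (I \<times> J) (\<lambda>(i,j) (k,l). u i * cnj (u k) * Q j l) z = (\<Sum>i\<in>I. \<Sum>j\<in>J. \<Sum>k\<in>I. \<Sum>l\<in>J. g i j k l)"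
  proof -
    have cp: "\<And>h. (\<Sum>a\<in>I \<times> J. h a) = (\<Sum>i\<in>I. \<Sum>j\<in>J. h (i,j))" by (simp add: sum.cartesian_product)
    show ?thesis unfolding qf_def g_def by (simp only: cp split_conv)
  qed
  also have "\<dots> = (\<Sum>j\<in>J. \<Sum>i\<in>I. \<Sum>k\<in>I. \<Sum>l\<in>J. g i j k l)" by (rule sum.swap)
  also have "\<dots> = (\<Sum>j\<in>J. \<Sum>i\<in>I. \<Sum>l\<in>J. \<Sum>k\<in>I. g i j k l)" by (intro sum.cong refl sum.swap)
  also have "\<dots> = (\<Sum>j\<in>J. \<Sum>l\<in>J. \<Sum>i\<in>I. \<Sum>k\<in>I. g i j k l)" by (intro sum.cong refl sum.swap)
  also have "\<dots> = qf J Q (\<lambda>l. \<Sum>k\<in>I. cnj (u k) * z (k,l))"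
    unfolding qf_def g_def by (simp add: sum_distrib_left sum_distrib_right ac_simps)
  finally show ?thesis .
qed

lemma qf_add: "qf I (\<lambda>a b. A a b + B a b) x = qf I A x + qf I B x"
  unfolding qf_def by (simp add: algebra_simps sum.distrib)

lemma kron_expand:
  "qf (I \<times> J) (\<lambda>(i,j) (k,l). (\<Sum>u\<leftarrow>us. u i * cnj (u k)) * Q j l) z
     = (\<Sum>u\<leftarrow>us. qf J Q (\<lambda>l. \<Sum>k\<in>I. cnj (u k) * z (k,l)))"
proof (induction us)
  case Nil
  then show ?case by (simp add: qf_def)
next
  case (Cons u us)
  have "qf (I \<times> J) (\<lambda>(i,j) (k,l). (\<Sum>u\<leftarrow>u # us. u i * cnj (u k)) * Q j l) z
      = qf (I \<times> J) (\<lambda>a b. (\<lambda>(i,j) (k,l). u i * cnj (u k) * Q j l) a b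
              + (\<lambda>(i,j) (k,l). (\<Sum>u\<leftarrow>us. u i * cnj (u k)) * Q j l) a b) z"
    by (simp add: split_def algebra_simps)
  also have "\<dots> = qf J Q (\<lambda>l. \<Sum>k\<in>I. cnj (u k) * z (k,l)) + (\<Sum>u\<leftarrow>us. qf J Q (\<lambda>l. \<Sum>k\<in>I. cnj (u k) * z (k,l)))"
    unfolding qf_add kron_single Cons.IH ..
  finally show ?case by simp
qed

lemma psd_kron:
  assumes "finite I" "finite J" "psd_on I P" "psd_on J Q"
  shows "psd_on (I \<times> J) (\<lambda>(i,j) (k,l). P i k * Q j l)"
proof -
  obtain us where us: "\<forall>a\<in>I. \<forall>b\<in>I. P a b = (\<Sum>u\<leftarrow>us. u a * cnj (u b))"
    using psd_decomp[OF assms(1,3)] by blast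
  show ?thesis unfolding psd_on_qf
  proof
    fix z :: "_ \<Rightarrow> complex"
    have "qf (I \<times> J) (\<lambda>(i,j) (k,l). P i k * Q j l) z = qf (I \<times> J) (\<lambda>(i,j) (k,l). (\<Sum>u\<leftarrow>us. u i * cnj (u k)) * Q j l) z"
      unfolding qf_def using us by (intro sum.cong refl) (auto simp: split_def)
    also have "\<dots> = (\<Sum>u\<leftarrow>us. qf J Q (\<lambda>l. \<Sum>k\<in>I. cnj (u k) * z (k,l)))" by (rule kron_expand)
    finally have eq: "qf (I \<times> J) (\<lambda>(i,j) (k,l). P i k * Q j l) z = \<dots>" .
    have Q: "\<And>w. Im (qf J Q w) = 0 \<and> Re (qf J Q w) \<ge> 0" using assms(4) unfolding psd_on_qf by blast
    have "Im (\<Sum>u\<leftarrow>us. qf J Q (\<lambda>l. \<Sum>k\<in>I. cnj (u k) * z (k,l))) = 0 \<and> Re (\<Sum>u\<leftarrow>us. qf J Q (\<lambda>l. \<Sum>k\<in>I. cnj (u k) * z (k,l))) \<ge> 0"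
    proof (induction us)
      case Nil then show ?case by simp
    next
      case (Cons u us) then show ?case using Q[of "\<lambda>l. \<Sum>k\<in>I. cnj (u k) * z (k,l)"] by simp
    qed
    then show "Im (qf (I \<times> J) (\<lambda>(i,j) (k,l). P i k * Q j l) z) = 0 \<and> 0 \<le> Re (qf (I \<times> J) (\<lambda>(i,j) (k,l). P i k * Q j l) z)"
      unfolding eq by simp
  qed
qed

locale tsetup =
  fixes M :: "'a::t2_space measure" and e :: 'f and k :: "'f \<Rightarrow> 'a \<Rightarrow> real"
  assumes X_compact: "compact (UNIV :: 'a set)"
    and radon: "radon_prob M"
    and supp: "unital_H_support_L2 M e k"
    and ke_nonneg: "AE x in M. k e x \<ge> 0"
    and sq_le: "AE x in M. (\<lambda>f. (k f x)\<^sup>2) summable_on (UNIV - {e}) \<and>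
                           infsum (\<lambda>f. (k f x)\<^sup>2) (UNIV - {e}) \<le> (k e x)\<^sup>2"
begin

lemma prob: "prob_space M" using radon unfolding radon_prob_def by (elim conjE)
lemma sets_M: "sets M = sets borel" using radon unfolding radon_prob_def by (elim conjE)

lemma meas_k[measurable]: "k f \<in> borel_measurable M"
  using supp unfolding unital_H_support_L2_def L2r_def by simp

lemma int_k2: "integrable M (\<lambda>x. (k f x)\<^sup>2)"
  using supp unfolding unital_H_support_L2_def L2r_def by simp

lemma int_k: "integrable M (k f)"
proof -
  interpret prob_space M by (rule prob)
  show ?thesis by (rule square_integrable_imp_integrable[OF meas_k int_k2])
qed

lemma int_ke1: "(\<integral>x. k e x \<partial>M) = 1" using supp unfolding unital_H_support_L2_def by simp
lemma int_kf0: "f \<noteq> e \<Longrightarrow> (\<integral>x. k f x \<partial>M) = 0" using supp unfolding unital_H_support_L2_def by simp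

lemma good: "AE x in M. k e x \<ge> 0 \<and> (\<forall>H. finite H \<longrightarrow> H \<subseteq> UNIV - {e} \<longrightarrow> (\<Sum>f\<in>H. (k f x)\<^sup>2) \<le> (k e x)\<^sup>2)"
  using ke_nonneg sq_le
proof eventually_elim
  case (elim x)
  show ?case
  proof (intro conjI allI impI)
    show "k e x \<ge> 0" using elim by simp
    fix H :: "'f set" assume "finite H" "H \<subseteq> UNIV - {e}"
    then have "(\<Sum>f\<in>H. (k f x)\<^sup>2) \<le> infsum (\<lambda>f. (k f x)\<^sup>2) (UNIV - {e})"
      using elim by (intro finite_sum_le_infsum) auto
    then show "(\<Sum>f\<in>H. (k f x)\<^sup>2) \<le> (k e x)\<^sup>2" using elim by linarith
  qed
qed

lemma good_abs: "AE x in M. \<forall>f. \<bar>k f x\<bar> \<le> k e x"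
  using good
proof eventually_elim
  case (elim x)
  have nn: "k e x \<ge> 0" and H: "\<And>H. finite H \<Longrightarrow> H \<subseteq> UNIV - {e} \<Longrightarrow> (\<Sum>f\<in>H. (k f x)\<^sup>2) \<le> (k e x)\<^sup>2"
    using elim by auto
  show ?case
  proof
    fix f show "\<bar>k f x\<bar> \<le> k e x"
    proof (cases "f = e")
      case True then show ?thesis using nn by simp
    next
      case False
      then have "(\<Sum>g\<in>{f}. (k g x)\<^sup>2) \<le> (k e x)\<^sup>2" by (intro H) auto
      then have "(k f x)\<^sup>2 \<le> (k e x)\<^sup>2" by simp
      then show ?thesis using nn by (metis abs_le_square_iff abs_of_nonneg)
    qed
  qed
qed

lemma meas_cont: "continuous_on UNIV v \<Longrightarrow> v \<in> borel_measurable M"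
  using borel_measurable_continuous_onI measurable_cong_sets[OF sets_M refl] by blast

lemma sup_norm_bound:
  fixes v :: "'a \<Rightarrow> complex"
  assumes "continuous_on UNIV v"
  shows "cmod (v x) \<le> sup_norm v"
proof -
  have "compact (v ` UNIV)" by (rule compact_continuous_image[OF assms X_compact])
  then have "bounded (v ` UNIV)" by (rule compact_imp_bounded)
  then have "bdd_above (range (\<lambda>x. cmod (v x)))"
    by (auto simp: bounded_iff bdd_above_def)
  then show ?thesis unfolding sup_norm_def by (rule cSUP_upper[OF UNIV_I])
qed

lemma sup_norm_nonneg:
  fixes v :: "'a \<Rightarrow> complex"
  shows "continuous_on UNIV v \<Longrightarrow> sup_norm v \<ge> 0"
  using sup_norm_bound[of v undefined] by (meson norm_ge_zero order_trans)

lemma int_vg: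
  fixes v :: "'a \<Rightarrow> complex"
  assumes "v \<in> borel_measurable M" "\<And>x. cmod (v x) \<le> B" "integrable M g" "g \<in> borel_measurable M"
  shows "integrable M (\<lambda>x. v x * complex_of_real (g x))"
proof (rule Bochner_Integration.integrable_bound[of _ "\<lambda>x. B * g x"])
  show "integrable M (\<lambda>x. B * g x)" using assms by simp
  show "(\<lambda>x. v x * complex_of_real (g x)) \<in> borel_measurable M" using assms by measurable
  show "AE x in M. norm (v x * complex_of_real (g x)) \<le> norm (B * g x)"
  proof (rule AE_I2)
    fix x
    have "B \<ge> 0" using assms(2)[of x] norm_ge_zero order_trans by blast
    have 1: "norm (v x * complex_of_real (g x)) = cmod (v x) * \<bar>g x\<bar>" by (simp add: norm_mult)
    have 2: "norm (B * g x) = B * \<bar>g x\<bar>" using \<open>B \<ge> 0\<close> by (simp add: abs_mult)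
    show "norm (v x * complex_of_real (g x)) \<le> norm (B * g x)"
      unfolding 1 2 using assms(2)[of x] by (rule mult_right_mono) simp
  qed
qed

lemma int_vk:
  fixes v :: "'a \<Rightarrow> complex"
  assumes "continuous_on UNIV v"
  shows "integrable M (\<lambda>x. v x * complex_of_real (k f x))"
  using int_vg[OF meas_cont[OF assms] sup_norm_bound[OF assms] int_k meas_k] .

end

lemma est:
  fixes M :: "'a measure" and v :: "'a \<Rightarrow> complex" and g :: "'f \<Rightarrow> 'a \<Rightarrow> real" and G :: "'a \<Rightarrow> real"
  assumes H: "finite H"
    and ig: "\<And>f. f \<in> H \<Longrightarrow> integrable M (\<lambda>x. v x * complex_of_real (g f x))"
    and iG: "integrable M (\<lambda>x. cmod (v x) * G x)"
    and bd: "AE x in M. L2_set (\<lambda>f. g f x) H \<le> G x"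
  shows "(\<Sum>f\<in>H. (cmod (\<integral>x. v x * complex_of_real (g f x) \<partial>M))\<^sup>2) \<le> (\<integral>x. cmod (v x) * G x \<partial>M)\<^sup>2"
proof -
  define a where "a f = (\<integral>x. v x * complex_of_real (g f x) \<partial>M)" for f
  define s where "s = (\<Sum>f\<in>H. (cmod (a f))\<^sup>2)"
  define C where "C = (\<integral>x. cmod (v x) * G x \<partial>M)"
  have s0: "s \<ge> 0" unfolding s_def by (intro sum_nonneg) auto
  have L: "L2_set (\<lambda>f. cmod (a f)) H = sqrt s" unfolding L2_set_def s_def ..
  have int1: "integrable M (\<lambda>x. v x * (\<Sum>f\<in>H. cnj (a f) * complex_of_real (g f x)))"
  proof -
    have "integrable M (\<lambda>x. \<Sum>f\<in>H. cnj (a f) * (v x * complex_of_real (g f x)))"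
      by (rule Bochner_Integration.integrable_sum) (use ig in auto)
    then show ?thesis by (simp add: sum_distrib_left ac_simps)
  qed
  have "complex_of_real s = (\<Sum>f\<in>H. cnj (a f) * a f)"
    unfolding s_def of_real_sum by (intro sum.cong refl) (metis complex_norm_square mult.commute of_real_power)
  also have "\<dots> = (\<Sum>f\<in>H. \<integral>x. cnj (a f) * (v x * complex_of_real (g f x)) \<partial>M)"
    unfolding a_def by simp
  also have "\<dots> = (\<integral>x. (\<Sum>f\<in>H. cnj (a f) * (v x * complex_of_real (g f x))) \<partial>M)"
    by (subst Bochner_Integration.integral_sum) (use ig in auto)
  also have "\<dots> = (\<integral>x. v x * (\<Sum>f\<in>H. cnj (a f) * complex_of_real (g f x)) \<partial>M)"
    by (simp add: sum_distrib_left ac_simps)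
  finally have sI: "complex_of_real s = \<dots>" .
  have "s = cmod (complex_of_real s)" using s0 by simp
  also have "\<dots> \<le> (\<integral>x. cmod (v x * (\<Sum>f\<in>H. cnj (a f) * complex_of_real (g f x))) \<partial>M)"
    unfolding sI by (rule integral_norm_bound)
  also have "\<dots> \<le> (\<integral>x. sqrt s * (cmod (v x) * G x) \<partial>M)"
  proof (rule integral_mono_AE)
    show "integrable M (\<lambda>x. cmod (v x * (\<Sum>f\<in>H. cnj (a f) * complex_of_real (g f x))))"
      using int1 by (rule integrable_norm)
    show "integrable M (\<lambda>x. sqrt s * (cmod (v x) * G x))" using iG by simp
    show "AE x in M. cmod (v x * (\<Sum>f\<in>H. cnj (a f) * complex_of_real (g f x))) \<le> sqrt s * (cmod (v x) * G x)"
      using bd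
    proof eventually_elim
      case (elim x)
      have "cmod (\<Sum>f\<in>H. cnj (a f) * complex_of_real (g f x)) \<le> (\<Sum>f\<in>H. cmod (cnj (a f) * complex_of_real (g f x)))"
        by (rule norm_sum)
      also have "\<dots> = (\<Sum>f\<in>H. \<bar>cmod (a f)\<bar> * \<bar>g f x\<bar>)" by (simp add: norm_mult)
      also have "\<dots> \<le> L2_set (\<lambda>f. cmod (a f)) H * L2_set (\<lambda>f. g f x) H" by (rule L2_set_mult_ineq)
      also have "\<dots> \<le> sqrt s * G x" unfolding L using elim s0 by (intro mult_left_mono) auto
      finally have "cmod (\<Sum>f\<in>H. cnj (a f) * complex_of_real (g f x)) \<le> sqrt s * G x" .
      then have "cmod (v x) * cmod (\<Sum>f\<in>H. cnj (a f) * complex_of_real (g f x)) \<le> cmod (v x) * (sqrt s * G x)"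
        by (intro mult_left_mono) auto
      then show ?case by (simp add: norm_mult ac_simps)
    qed
  qed
  also have "\<dots> = sqrt s * C" unfolding C_def by simp
  finally have sC: "s \<le> sqrt s * C" .
  show ?thesis
  proof (cases "s = 0")
    case True
    then show ?thesis unfolding s_def[symmetric] a_def[symmetric] C_def[symmetric] by simp
  next
    case False
    then have sp: "sqrt s > 0" using s0 by simp
    have "sqrt s * sqrt s \<le> sqrt s * C" using sC s0 by simp
    then have "sqrt s \<le> C" using sp by (meson mult_le_cancel_left_pos)
    then have "(sqrt s)\<^sup>2 \<le> C\<^sup>2" using sp by (intro power_mono) auto
    then show ?thesis unfolding s_def[symmetric] a_def[symmetric] C_def[symmetric] using s0 by simp
  qed
qed

lemma l2_finsums:
  fixes x :: "'f \<Rightarrow> complex"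
  assumes "\<And>H. finite H \<Longrightarrow> (\<Sum>f\<in>H. (cmod (x f))\<^sup>2) \<le> C"
  shows "x \<in> l2" "infsum (\<lambda>f. (cmod (x f))\<^sup>2) UNIV \<le> C" "l2_norm x \<le> sqrt C"
proof -
  have sm: "(\<lambda>f. (cmod (x f))\<^sup>2) summable_on UNIV"
    by (rule nonneg_bdd_above_summable_on) (use assms in \<open>auto simp: bdd_above_def\<close>)
  then show "x \<in> l2" unfolding l2_def by simp
  show i: "infsum (\<lambda>f. (cmod (x f))\<^sup>2) UNIV \<le> C"
    by (rule infsum_le_finite_sums[OF sm]) (use assms in auto)
  then show "l2_norm x \<le> sqrt C" unfolding l2_norm_def by simp
qed

lemma l2_finsupp:
  fixes x :: "'f \<Rightarrow> complex"
  assumes "finite S" "\<And>f. f \<notin> S \<Longrightarrow> x f = 0"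
  shows "x \<in> l2" "l2_norm x = L2_set (\<lambda>f. cmod (x f)) S"
    "l2_inner x y = (\<Sum>f\<in>S. x f * cnj (y f))"
proof -
  have i1: "infsum (\<lambda>f. (cmod (x f))\<^sup>2) UNIV = (\<Sum>f\<in>S. (cmod (x f))\<^sup>2)"
  proof -
    have "infsum (\<lambda>f. (cmod (x f))\<^sup>2) UNIV = infsum (\<lambda>f. (cmod (x f))\<^sup>2) S"
      by (rule infsum_cong_neutral) (use assms in auto)
    then show ?thesis using assms(1) by (simp add: infsum_finite)
  qed
  have "(\<lambda>f. (cmod (x f))\<^sup>2) summable_on UNIV"
  proof -
    have "(\<lambda>f. (cmod (x f))\<^sup>2) summable_on S" using assms(1) by (rule summable_on_finite)
    moreover have "((\<lambda>f. (cmod (x f))\<^sup>2) summable_on S) = ((\<lambda>f. (cmod (x f))\<^sup>2) summable_on UNIV)"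
      by (rule summable_on_cong_neutral) (use assms in auto)
    ultimately show ?thesis by simp
  qed
  then show "x \<in> l2" unfolding l2_def by simp
  show "l2_norm x = L2_set (\<lambda>f. cmod (x f)) S" unfolding l2_norm_def L2_set_def i1 ..
  have "l2_inner x y = infsum (\<lambda>f. x f * cnj (y f)) S"
    unfolding l2_inner_def by (rule infsum_cong_neutral) (use assms in auto)
  then show "l2_inner x y = (\<Sum>f\<in>S. x f * cnj (y f))" using assms(1) by (simp add: infsum_finite)
qed

context tsetup begin

lemma int_bk:
  fixes g :: "'a \<Rightarrow> real"
  assumes "g \<in> borel_measurable M" "\<And>x. \<bar>g x\<bar> \<le> B"
  shows "integrable M (\<lambda>x. g x * k f x)"
proof (rule Bochner_Integration.integrable_bound[of _ "\<lambda>x. B * k f x"])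
  show "integrable M (\<lambda>x. B * k f x)" using int_k by simp
  show "(\<lambda>x. g x * k f x) \<in> borel_measurable M" using assms by measurable
  show "AE x in M. norm (g x * k f x) \<le> norm (B * k f x)"
  proof (rule AE_I2)
    fix x
    have B: "B \<ge> 0" using assms(2)[of x] by linarith
    have "\<bar>g x\<bar> * \<bar>k f x\<bar> \<le> B * \<bar>k f x\<bar>" using assms(2)[of x] by (rule mult_right_mono) simp
    then show "norm (g x * k f x) \<le> norm (B * k f x)" using B by (simp add: abs_mult)
  qed
qed

lemma L2_good: "AE x in M. \<forall>H. finite H \<longrightarrow> H \<subseteq> UNIV - {e} \<longrightarrow> L2_set (\<lambda>f. k f x) H \<le> k e x"
  using good
proof eventually_elim
  case (elim x)
  show ?case
  proof (intro allI impI)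
    fix H :: "'f set" assume "finite H" "H \<subseteq> UNIV - {e}"
    then have "(\<Sum>f\<in>H. (k f x)\<^sup>2) \<le> (k e x)\<^sup>2" using elim by blast
    then have "sqrt (\<Sum>f\<in>H. (k f x)\<^sup>2) \<le> sqrt ((k e x)\<^sup>2)" by (rule real_sqrt_le_mono)
    then show "L2_set (\<lambda>f. k f x) H \<le> k e x" using elim unfolding L2_set_def by simp
  qed
qed

lemma Tk_e_bound:
  fixes v :: "'a \<Rightarrow> complex"
  assumes "continuous_on UNIV v"
  shows "cmod (Tk M k v e) \<le> (\<integral>x. cmod (v x) * k e x \<partial>M)"
proof -
  have "cmod (Tk M k v e) \<le> (\<integral>x. cmod (v x * complex_of_real (k e x)) \<partial>M)"
    unfolding Tk_def by (rule integral_norm_bound)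
  also have "\<dots> = (\<integral>x. cmod (v x) * k e x \<partial>M)"
    by (rule integral_cong_AE) (use ke_nonneg meas_cont[OF assms] in \<open>auto simp: norm_mult\<close>)
  finally show ?thesis .
qed

lemma Tk_rest_bound:
  fixes v :: "'a \<Rightarrow> complex"
  assumes "continuous_on UNIV v" "finite H" "e \<notin> H"
  shows "(\<Sum>f\<in>H. (cmod (Tk M k v f))\<^sup>2) \<le> (\<integral>x. cmod (v x) * k e x \<partial>M)\<^sup>2"
  unfolding Tk_def
proof (rule est[OF assms(2)])
  show "\<And>f. f \<in> H \<Longrightarrow> integrable M (\<lambda>x. v x * complex_of_real (k f x))" using int_vk[OF assms(1)] .
  show "integrable M (\<lambda>x. cmod (v x) * k e x)"
    by (rule int_bk[of _ "sup_norm v"]) (use meas_cont[OF assms(1)] sup_norm_bound[OF assms(1)] in auto)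
  show "AE x in M. L2_set (\<lambda>f. k f x) H \<le> k e x" using L2_good by eventually_elim (use assms in auto)
qed

lemma Tk_finsum:
  fixes v :: "'a \<Rightarrow> complex"
  assumes "continuous_on UNIV v" "finite H"
  shows "(\<Sum>f\<in>H. (cmod (Tk M k v f))\<^sup>2) \<le> 2 * (\<integral>x. cmod (v x) * k e x \<partial>M)\<^sup>2"
proof -
  define C where "C = (\<integral>x. cmod (v x) * k e x \<partial>M)"
  have C0: "C \<ge> 0" unfolding C_def using ke_nonneg by (intro integral_nonneg_AE) auto
  have r: "(\<Sum>f\<in>H - {e}. (cmod (Tk M k v f))\<^sup>2) \<le> C\<^sup>2" unfolding C_def
    by (rule Tk_rest_bound) (use assms in auto)
  have ee: "(cmod (Tk M k v e))\<^sup>2 \<le> C\<^sup>2" unfolding C_def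
    using Tk_e_bound[OF assms(1)] by (intro power_mono) auto
  show ?thesis
  proof (cases "e \<in> H")
    case True
    then have "(\<Sum>f\<in>H. (cmod (Tk M k v f))\<^sup>2) = (cmod (Tk M k v e))\<^sup>2 + (\<Sum>f\<in>H - {e}. (cmod (Tk M k v f))\<^sup>2)"
      using assms(2) by (simp add: sum.remove)
    then show ?thesis using r ee unfolding C_def by simp
  next
    case False
    then have "H - {e} = H" by auto
    then show ?thesis using r C0 unfolding C_def by (simp add: power2_eq_square) (smt (verit) mult_nonneg_nonneg C0 C_def)
  qed
qed

lemma Tk_l2:
  fixes v :: "'a \<Rightarrow> complex"
  assumes "continuous_on UNIV v"
  shows "Tk M k v \<in> l2"
  by (rule l2_finsums(1)[OF Tk_finsum[OF assms]])

lemma Tk_one: "Tk M k (\<lambda>_. 1) = basis_vec e"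
proof
  fix f
  have "Tk M k (\<lambda>_. 1) f = complex_of_real (\<integral>x. k f x \<partial>M)" unfolding Tk_def by simp
  then show "Tk M k (\<lambda>_. 1) f = basis_vec e f" using int_ke1 int_kf0 by (simp add: basis_vec_def)
qed

lemma Tk_cone:
  fixes v :: "'a \<Rightarrow> complex"
  assumes cv: "continuous_on UNIV v" and rv: "\<And>x. Im (v x) = 0 \<and> Re (v x) \<ge> 0"
  shows "Tk M k v \<in> herm_cone e"
proof -
  define C where "C = (\<integral>x. cmod (v x) * k e x \<partial>M)"
  have vx: "\<And>x. v x = complex_of_real (Re (v x))" using rv by (simp add: complex_eq_iff)
  have cm: "\<And>x. cmod (v x) = Re (v x)" using rv by (metis vx norm_of_real abs_of_nonneg)
  have real: "\<And>f. Tk M k v f = complex_of_real (\<integral>x. Re (v x) * k f x \<partial>M)"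
  proof -
    fix f
    have "Tk M k v f = (\<integral>x. complex_of_real (Re (v x) * k f x) \<partial>M)"
      unfolding Tk_def by (subst vx) simp
    then show "Tk M k v f = complex_of_real (\<integral>x. Re (v x) * k f x \<partial>M)"
      by (simp only: integral_complex_of_real)
  qed
  have Te: "Re (Tk M k v e) = C" unfolding real C_def cm by simp
  have C0: "C \<ge> 0" unfolding C_def using ke_nonneg by (intro integral_nonneg_AE) auto
  have "l2_norm (Tk M k v) \<le> sqrt (2 * C\<^sup>2)"
    by (rule l2_finsums(3)) (use Tk_finsum[OF cv] in \<open>simp add: C_def\<close>)
  also have "\<dots> = sqrt 2 * C" using C0 by (simp add: real_sqrt_mult)
  finally have nb: "l2_norm (Tk M k v) \<le> sqrt 2 * C" .
  have inner: "l2_inner (Tk M k v) (basis_vec e) = Tk M k v e"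
  proof -
    have "l2_inner (Tk M k v) (basis_vec e) = infsum (\<lambda>f. Tk M k v f * cnj (basis_vec e f)) {e}"
      unfolding l2_inner_def by (rule infsum_cong_neutral) (auto simp: basis_vec_def)
    then show ?thesis by (simp add: basis_vec_def)
  qed
  have star: "l2_star (Tk M k v) = Tk M k v" unfolding l2_star_def by (rule ext) (simp add: real)
  show ?thesis unfolding herm_cone_def using Tk_l2[OF cv] star nb Te inner by simp
qed

end

lemma l2_has_sum:
  fixes x y :: "'f \<Rightarrow> complex"
  assumes "x \<in> l2" "y \<in> l2"
  shows "((\<lambda>f. x f * cnj (y f)) has_sum l2_inner x y) UNIV"
proof -
  have s1: "(\<lambda>f. (cmod (x f))\<^sup>2 + (cmod (y f))\<^sup>2) summable_on UNIV"
    using assms unfolding l2_def by (intro summable_on_add) auto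
  have s2: "(\<lambda>f. norm (x f * cnj (y f))) summable_on UNIV"
  proof (rule summable_on_comparison_test[OF s1])
    fix f
    have "norm (x f * cnj (y f)) = cmod (x f) * cmod (y f)" by (simp add: norm_mult)
    also have "\<dots> \<le> 2 * cmod (x f) * cmod (y f)" by simp
    also have "\<dots> \<le> (cmod (x f))\<^sup>2 + (cmod (y f))\<^sup>2" by (rule sum_squares_bound)
    finally show "norm (x f * cnj (y f)) \<le> (cmod (x f))\<^sup>2 + (cmod (y f))\<^sup>2" .
  qed simp
  have "(\<lambda>f. x f * cnj (y f)) summable_on UNIV" by (rule Infinite_Sum.abs_summable_summable[OF s2])
  then show ?thesis unfolding l2_inner_def by (rule has_sum_infsum)
qed

lemma psd_on_herm_nat:
  fixes n :: nat
  assumes "psd_on {..<n} P" "i < n" "j < n"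
  shows "P i j = cnj (P j i)"
  using psd_herm[OF assms(1), of j i] assms by simp

context tsetup begin

definition KS :: "'f set \<Rightarrow> 'a \<Rightarrow> 'f \<Rightarrow> complex" where
  "KS S x = (\<lambda>f. if f \<in> S then complex_of_real (k f x) else 0)"

lemma KS_cone:
  assumes S: "finite S" "e \<in> S"
  shows "AE x in M. KS S x \<in> herm_cone e"
  using good
proof eventually_elim
  case (elim x)
  have nn: "k e x \<ge> 0" and H: "\<And>H. finite H \<Longrightarrow> H \<subseteq> UNIV - {e} \<Longrightarrow> (\<Sum>f\<in>H. (k f x)\<^sup>2) \<le> (k e x)\<^sup>2"
    using elim by auto
  have fs: "\<And>f. f \<notin> S \<Longrightarrow> KS S x f = 0" by (simp add: KS_def)
  note L = l2_finsupp[OF S(1) fs]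
  have "l2_norm (KS S x) = L2_set (\<lambda>f. cmod (KS S x f)) S" by (rule L(2))
  also have "\<dots> = sqrt ((k e x)\<^sup>2 + (\<Sum>f\<in>S - {e}. (k f x)\<^sup>2))"
    unfolding L2_set_def using S by (simp add: KS_def sum.remove)
  also have "\<dots> \<le> sqrt (2 * (k e x)\<^sup>2)" using H[of "S - {e}"] S by auto
  also have "\<dots> = sqrt 2 * k e x" using nn by (simp add: real_sqrt_mult)
  finally have nb: "l2_norm (KS S x) \<le> sqrt 2 * k e x" .
  have inner: "l2_inner (KS S x) (basis_vec e) = complex_of_real (k e x)"
  proof -
    have "l2_inner (KS S x) (basis_vec e) = (\<Sum>f\<in>S. KS S x f * cnj (basis_vec e f))" by (rule L(3))
    also have "\<dots> = (\<Sum>f\<in>S. if f = e then complex_of_real (k e x) else 0)"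
      by (rule sum.cong) (auto simp: KS_def basis_vec_def)
    finally show ?thesis using S by simp
  qed
  have star: "l2_star (KS S x) = KS S x" unfolding l2_star_def KS_def by auto
  show ?case unfolding herm_cone_def using L(1) nb inner star by simp
qed

lemma Tk_herm:
  fixes v :: "nat \<Rightarrow> nat \<Rightarrow> 'a \<Rightarrow> complex"
  assumes psd: "\<And>x. psd_on {..<n} (\<lambda>i j. v i j x)" and ij: "i < n" "j < n"
  shows "Tk M k (v i j) = l2_star (Tk M k (v j i))"
proof
  fix f
  have vc: "\<And>x. v i j x = cnj (v j i x)" using psd_on_herm_nat[OF psd ij] by simp
  have "Tk M k (v i j) f = (\<integral>x. cnj (v j i x * complex_of_real (k f x)) \<partial>M)"
    unfolding Tk_def vc by simp
  also have "\<dots> = cnj (Tk M k (v j i) f)" unfolding Tk_def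
    using Bochner_Integration.integral_cnj[of M "\<lambda>x. v j i x * complex_of_real (k f x)"] by simp
  finally show "Tk M k (v i j) f = l2_star (Tk M k (v j i)) f" unfolding l2_star_def .
qed

definition Qm :: "'f set \<Rightarrow> (nat \<Rightarrow> nat \<Rightarrow> 'f \<Rightarrow> complex) \<Rightarrow> nat \<Rightarrow> nat \<Rightarrow> 'a \<Rightarrow> complex" where
  "Qm S \<eta> j q x = (\<Sum>f\<in>S. complex_of_real (k f x) * cnj (\<eta> j q f))"

lemma Qm_inner: "finite S \<Longrightarrow> l2_inner (KS S x) (\<eta> j q) = Qm S \<eta> j q x"
  unfolding Qm_def by (subst l2_finsupp(3)[of S]) (auto simp: KS_def)

lemma AS_int:
  fixes v :: "'a \<Rightarrow> complex"
  assumes cv: "continuous_on UNIV v" and S: "finite S"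
  shows "(\<Sum>f\<in>S. Tk M k v f * cnj (\<eta> j q f)) = (\<integral>x. v x * Qm S \<eta> j q x \<partial>M)"
    "integrable M (\<lambda>x. v x * Qm S \<eta> j q x)"
proof -
  have eq: "\<And>x. v x * Qm S \<eta> j q x = (\<Sum>f\<in>S. cnj (\<eta> j q f) * (v x * complex_of_real (k f x)))"
    unfolding Qm_def by (simp add: sum_distrib_left ac_simps)
  have ii: "\<And>f. integrable M (\<lambda>x. cnj (\<eta> j q f) * (v x * complex_of_real (k f x)))"
    using int_vk[OF cv] by simp
  show "integrable M (\<lambda>x. v x * Qm S \<eta> j q x)" unfolding eq
    by (rule Bochner_Integration.integrable_sum) (use ii in auto)
  show "(\<Sum>f\<in>S. Tk M k v f * cnj (\<eta> j q f)) = (\<integral>x. v x * Qm S \<eta> j q x \<partial>M)"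
  proof -
    have pw: "\<And>f. Tk M k v f * cnj (\<eta> j q f) = (\<integral>x. cnj (\<eta> j q f) * (v x * complex_of_real (k f x)) \<partial>M)"
    proof -
      fix f
      have "Tk M k v f * cnj (\<eta> j q f) = cnj (\<eta> j q f) * Tk M k v f" by (rule mult.commute)
      also have "\<dots> = (\<integral>x. cnj (\<eta> j q f) * (v x * complex_of_real (k f x)) \<partial>M)"
        unfolding Tk_def by (rule integral_mult_right_zero[symmetric])
      finally show "Tk M k v f * cnj (\<eta> j q f) = (\<integral>x. cnj (\<eta> j q f) * (v x * complex_of_real (k f x)) \<partial>M)" .
    qed
    have s1: "(\<integral>x. (\<Sum>f\<in>S. cnj (\<eta> j q f) * (v x * complex_of_real (k f x))) \<partial>M)
        = (\<Sum>f\<in>S. \<integral>x. cnj (\<eta> j q f) * (v x * complex_of_real (k f x)) \<partial>M)"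
      by (rule Bochner_Integration.integral_sum) (use ii in auto)
    show ?thesis unfolding eq s1 by (rule sum.cong[OF refl]) (rule pw)
  qed
qed

lemma Tk_max_cone:
  fixes v :: "nat \<Rightarrow> nat \<Rightarrow> 'a \<Rightarrow> complex"
  assumes cont: "\<forall>i<n. \<forall>j<n. continuous_on UNIV (v i j)" and psd: "\<forall>x. psd_on {..<n} (\<lambda>i j. v i j x)"
  shows "max_cone e n (\<lambda>i j. Tk M k (v i j))"
  unfolding max_cone_def
proof (rule conjI)
  show "\<forall>i<n. \<forall>j<n. Tk M k (v i j) \<in> l2 \<and> Tk M k (v i j) = l2_star (Tk M k (v j i))"
    using Tk_l2 Tk_herm psd cont by blast
  show "\<forall>m \<eta>. boxdot_cone e m \<eta> \<longrightarrow> psd_on ({..<n} \<times> {..<m}) (\<lambda>(i, j) (p, l). l2_inner (Tk M k (v i p)) (\<eta> j l))"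
  proof (intro allI impI)
  fix m \<eta> assume bx: "boxdot_cone e m \<eta>"
  have etal2: "\<And>j q. j < m \<Longrightarrow> q < m \<Longrightarrow> \<eta> j q \<in> l2" using bx unfolding boxdot_cone_def by blast
  have etapsd: "\<And>\<xi>. \<xi> \<in> herm_cone e \<Longrightarrow> psd_on {..<m} (\<lambda>s t. l2_inner \<xi> (\<eta> s t))"
    using bx unfolding boxdot_cone_def by blast
  define I where "I = {..<n} \<times> {..<m}"
  define A where "A = (\<lambda>(i,j) (p,q). l2_inner (Tk M k (v i p)) (\<eta> j q))"
  define AS where "AS S = (\<lambda>(i,j) (p,q). \<Sum>f\<in>S. Tk M k (v i p) f * cnj (\<eta> j q f))" for S
  define Pt where "Pt = {c :: complex. Im c = 0 \<and> Re c \<ge> 0}"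
  have clP: "closed Pt" unfolding Pt_def
    by (intro closed_Collect_conj closed_Collect_eq closed_Collect_le continuous_intros)
  have fI: "finite I" unfolding I_def by simp
  show "psd_on ({..<n} \<times> {..<m}) (\<lambda>(i, j) (p, l). l2_inner (Tk M k (v i p)) (\<eta> j l))"
    unfolding psd_on_qf I_def[symmetric] A_def[symmetric]
  proof
    fix z :: "nat \<times> nat \<Rightarrow> complex"
    have ent: "((\<lambda>S. AS S a b) \<longlongrightarrow> A a b) (finite_subsets_at_top UNIV)" if abI: "a \<in> I" "b \<in> I" for a b
    proof -
      obtain i j p q where ab: "a = (i,j)" "b = (p,q)" and ij: "i < n" "j < m" "p < n" "q < m"
        using abI unfolding I_def by (cases a; cases b) auto
      have "((\<lambda>f. Tk M k (v i p) f * cnj (\<eta> j q f)) has_sum l2_inner (Tk M k (v i p)) (\<eta> j q)) UNIV"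
        by (rule l2_has_sum[OF Tk_l2 etal2]) (use cont ij in auto)
      then show ?thesis unfolding has_sum_def AS_def A_def ab by simp
    qed
    have lim: "((\<lambda>S. qf I (AS S) z) \<longlongrightarrow> qf I A z) (finite_subsets_at_top UNIV)"
      unfolding qf_def by (intro tendsto_sum tendsto_mult tendsto_const ent)
    have ev: "eventually (\<lambda>S. qf I (AS S) z \<in> Pt) (finite_subsets_at_top UNIV)"
      unfolding eventually_finite_subsets_at_top
    proof (intro exI[of _ "{e}"] conjI allI impI)
      fix S :: "'f set" assume "finite S \<and> {e} \<subseteq> S \<and> S \<subseteq> UNIV"
      then have S: "finite S" "e \<in> S" by auto
      define G where "G x = (\<lambda>(i,j) (p,q). v i p x * Qm S \<eta> j q x)" for x
      have entI: "integrable M (\<lambda>x. G x a b)" "AS S a b = (\<integral>x. G x a b \<partial>M)" if abI: "a \<in> I" "b \<in> I" for a b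
      proof -
        obtain i j p q where ab: "a = (i,j)" "b = (p,q)" and ij: "i < n" "j < m" "p < n" "q < m"
          using abI unfolding I_def by (cases a; cases b) auto
        show "integrable M (\<lambda>x. G x a b)" unfolding G_def ab using AS_int(2)[OF _ S(1)] cont ij by simp
        show "AS S a b = (\<integral>x. G x a b \<partial>M)" unfolding G_def AS_def ab using AS_int(1)[OF _ S(1)] cont ij by simp
      qed
      have "qf I (AS S) z = (\<Sum>a\<in>I. \<Sum>b\<in>I. \<integral>x. cnj (z a) * G x a b * z b \<partial>M)"
        unfolding qf_def by (intro sum.cong refl) (simp add: entI)
      also have "\<dots> = (\<Sum>a\<in>I. \<integral>x. (\<Sum>b\<in>I. cnj (z a) * G x a b * z b) \<partial>M)"
        by (intro sum.cong refl, subst Bochner_Integration.integral_sum) (auto simp: entI)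
      also have "\<dots> = (\<integral>x. qf I (G x) z \<partial>M)"
        unfolding qf_def by (subst Bochner_Integration.integral_sum) (auto simp: entI)
      finally have qI: "qf I (AS S) z = (\<integral>x. qf I (G x) z \<partial>M)" .
      have intq: "integrable M (\<lambda>x. qf I (G x) z)"
        unfolding qf_def by (auto simp: entI)
      have aeP: "AE x in M. Im (qf I (G x) z) = 0 \<and> Re (qf I (G x) z) \<ge> 0"
        using KS_cone[OF S]
      proof eventually_elim
        case (elim x)
        have Qpsd: "psd_on {..<m} (\<lambda>j q. Qm S \<eta> j q x)"
          using etapsd[OF elim] by (simp add: Qm_inner[OF S(1)])
        have "psd_on I (G x)" unfolding I_def G_def
          by (rule psd_kron) (use psd Qpsd in auto)
        then show ?case unfolding psd_on_qf by blast
      qed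
      have "Im (qf I (AS S) z) = 0"
      proof -
        have "Im (qf I (AS S) z) = (\<integral>x. Im (qf I (G x) z) \<partial>M)"
          unfolding qI by (rule integral_Im[symmetric, OF intq])
        also have "\<dots> = 0" using aeP by (intro integral_eq_zero_AE) auto
        finally show ?thesis .
      qed
      moreover have "Re (qf I (AS S) z) \<ge> 0"
      proof -
        have "Re (qf I (AS S) z) = (\<integral>x. Re (qf I (G x) z) \<partial>M)"
          unfolding qI by (rule integral_Re[symmetric, OF intq])
        also have "\<dots> \<ge> 0" using aeP by (intro integral_nonneg_AE) auto
        finally show ?thesis .
      qed
      ultimately show "qf I (AS S) z \<in> Pt" unfolding Pt_def by simp
    qed auto
    have "qf I A z \<in> Pt"
      by (rule Lim_in_closed_set[OF clP ev finite_subsets_at_top_neq_bot lim])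
    then show "Im (qf I A z) = 0 \<and> 0 \<le> Re (qf I A z)" unfolding Pt_def by simp
  qed
  qed
qed

end

context tsetup begin

definition mu' where "mu' = density M (\<lambda>x. ennreal (k e x))"
definition k' where "k' = (\<lambda>f. if f = e then (\<lambda>_. 1) else (\<lambda>x. k f x / k e x))"

lemma sets_mu': "sets mu' = sets M" unfolding mu'_def by simp
lemma space_mu': "space mu' = space M" unfolding mu'_def by simp

lemma meas_k'[measurable]: "k' f \<in> borel_measurable M" unfolding k'_def by auto

lemma dens_int:
  fixes g :: "'a \<Rightarrow> 'b::{banach, second_countable_topology}"
  assumes "g \<in> borel_measurable M"
  shows "(\<integral>x. g x \<partial>mu') = (\<integral>x. k e x *\<^sub>R g x \<partial>M)"
  unfolding mu'_def by (rule integral_density) (use assms ke_nonneg in auto)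

lemma k'_ae: "AE x in M. \<forall>f. k e x * k' f x = k f x"
  using good_abs
proof eventually_elim
  case (elim x)
  show ?case
  proof
    fix f
    show "k e x * k' f x = k f x"
    proof (cases "f = e")
      case True then show ?thesis by (simp add: k'_def)
    next
      case False
      show ?thesis
      proof (cases "k e x = 0")
        case True then show ?thesis using elim[rule_format, of f] by simp
      next
        case False then show ?thesis using \<open>f \<noteq> e\<close> by (simp add: k'_def)
      qed
    qed
  qed
qed

lemma prob': "prob_space mu'"
proof (rule prob_spaceI)
  have "emeasure mu' (space mu') = (\<integral>\<^sup>+ x. ennreal (k e x) \<partial>M)"
    unfolding mu'_def by (simp add: emeasure_density)
  also have "\<dots> = ennreal (\<integral>x. k e x \<partial>M)"
    by (rule nn_integral_eq_integral) (use int_k ke_nonneg in auto)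
  also have "\<dots> = 1" using int_ke1 by simp
  finally show "emeasure mu' (space mu') = 1" .
qed

lemma Tk_dens:
  fixes v :: "'a \<Rightarrow> complex"
  assumes "continuous_on UNIV v"
  shows "Tk M k v f = (\<integral>x. v x * complex_of_real (k' f x) \<partial>mu')"
proof -
  have "(\<integral>x. v x * complex_of_real (k' f x) \<partial>mu') = (\<integral>x. k e x *\<^sub>R (v x * complex_of_real (k' f x)) \<partial>M)"
    by (rule dens_int) (use meas_cont[OF assms] in measurable)
  also have "\<dots> = (\<integral>x. v x * complex_of_real (k f x) \<partial>M)"
  proof (rule integral_cong_AE)
    show "(\<lambda>x. k e x *\<^sub>R (v x * complex_of_real (k' f x))) \<in> borel_measurable M"
      using meas_cont[OF assms] by measurable
    show "(\<lambda>x. v x * complex_of_real (k f x)) \<in> borel_measurable M"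
      using meas_cont[OF assms] by measurable
    show "AE x in M. k e x *\<^sub>R (v x * complex_of_real (k' f x)) = v x * complex_of_real (k f x)"
      using k'_ae
    proof eventually_elim
      case (elim x)
      have "k e x *\<^sub>R (v x * complex_of_real (k' f x)) = v x * complex_of_real (k e x * k' f x)"
        by (simp add: scaleR_conv_of_real)
      then show ?case using elim by simp
    qed
  qed
  finally show ?thesis unfolding Tk_def by simp
qed

lemma H_v:
  fixes v :: "'a \<Rightarrow> real"
  assumes a: "continuous_on UNIV v \<and> (\<forall>x. 0 \<le> v x)"
  shows "(\<lambda>f. (\<integral>x. v x * k' f x \<partial>mu')\<^sup>2) summable_on (UNIV - {e}) \<and>
        infsum (\<lambda>f. (\<integral>x. v x * k' f x \<partial>mu')\<^sup>2) (UNIV - {e}) \<le> (\<integral>x. v x \<partial>mu')\<^sup>2"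
proof -
  define vc where "vc x = complex_of_real (v x)" for x
  have cvc: "continuous_on UNIV vc" unfolding vc_def using a by (intro continuous_intros) auto
  have mv: "v \<in> borel_measurable M" using a meas_cont by blast
  have eqf: "(\<integral>x. v x * k' f x \<partial>mu') = Re (Tk M k vc f)" for f
  proof -
    have "(\<integral>x. v x * k' f x \<partial>mu') = (\<integral>x. k e x *\<^sub>R (v x * k' f x) \<partial>M)"
      by (rule dens_int) (use mv in measurable)
    also have "\<dots> = (\<integral>x. v x * k f x \<partial>M)"
    proof (rule integral_cong_AE)
      show "(\<lambda>x. k e x *\<^sub>R (v x * k' f x)) \<in> borel_measurable M" using mv by measurable
      show "(\<lambda>x. v x * k f x) \<in> borel_measurable M" using mv by measurable
      show "AE x in M. k e x *\<^sub>R (v x * k' f x) = v x * k f x"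
        using k'_ae by eventually_elim (metis mult.left_commute real_scaleR_def)
    qed
    also have "\<dots> = Re (Tk M k vc f)"
      unfolding Tk_def vc_def by (simp flip: of_real_mult)
    finally show ?thesis .
  qed
  have eqv: "(\<integral>x. v x \<partial>mu') = (\<integral>x. cmod (vc x) * k e x \<partial>M)"
  proof -
    have "(\<integral>x. v x \<partial>mu') = (\<integral>x. k e x *\<^sub>R v x \<partial>M)" by (rule dens_int) (use mv in measurable)
    also have "\<dots> = (\<integral>x. cmod (vc x) * k e x \<partial>M)"
      unfolding vc_def using a by (simp add: mult.commute)
    finally show ?thesis .
  qed
  have Tr: "Tk M k vc f = complex_of_real (Re (Tk M k vc f))" for f
    unfolding Tk_def vc_def by (simp flip: of_real_mult)
  have fin: "(\<Sum>f\<in>H. (\<integral>x. v x * k' f x \<partial>mu')\<^sup>2) \<le> (\<integral>x. v x \<partial>mu')\<^sup>2" if "finite H" "H \<subseteq> UNIV - {e}" for H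
  proof -
    have "(\<Sum>f\<in>H. (\<integral>x. v x * k' f x \<partial>mu')\<^sup>2) = (\<Sum>f\<in>H. (cmod (Tk M k vc f))\<^sup>2)"
    proof (rule sum.cong[OF refl])
      fix f
      have "cmod (Tk M k vc f) = \<bar>Re (Tk M k vc f)\<bar>" by (subst Tr) (simp only: norm_of_real)
      then show "(\<integral>x. v x * k' f x \<partial>mu')\<^sup>2 = (cmod (Tk M k vc f))\<^sup>2" unfolding eqf by simp
    qed
    also have "\<dots> \<le> (\<integral>x. cmod (vc x) * k e x \<partial>M)\<^sup>2"
      by (rule Tk_rest_bound[OF cvc]) (use that in auto)
    finally show ?thesis unfolding eqv .
  qed
  have sm: "(\<lambda>f. (\<integral>x. v x * k' f x \<partial>mu')\<^sup>2) summable_on (UNIV - {e})"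
    by (rule nonneg_bdd_above_summable_on) (use fin in \<open>auto simp: bdd_above_def\<close>)
  show "(\<lambda>f. (\<integral>x. v x * k' f x \<partial>mu')\<^sup>2) summable_on (UNIV - {e}) \<and>
        infsum (\<lambda>f. (\<integral>x. v x * k' f x \<partial>mu')\<^sup>2) (UNIV - {e}) \<le> (\<integral>x. v x \<partial>mu')\<^sup>2"
    using sm infsum_le_finite_sums[OF sm fin] by blast
qed

lemma H_support': "H_support_on_X mu' e k'"
  unfolding H_support_on_X_def
proof (intro conjI allI impI)
  fix f
  show "k' f \<in> borel_measurable mu'" using meas_k' measurable_cong_sets[OF sets_mu' refl] by blast
  show "AE x in mu'. \<bar>k' f x\<bar> \<le> 1"
    unfolding mu'_def
  proof (subst AE_density)
    show "(\<lambda>x. ennreal (k e x)) \<in> borel_measurable M" by measurable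
    show "AE x in M. 0 < ennreal (k e x) \<longrightarrow> \<bar>k' f x\<bar> \<le> 1"
      using good_abs
    proof eventually_elim
      case (elim x)
      show ?case
      proof
        assume "0 < ennreal (k e x)"
        then have pos: "k e x > 0" by (simp add: ennreal_neg)
        have b: "\<bar>k f x\<bar> \<le> k e x" using elim by blast
        show "\<bar>k' f x\<bar> \<le> 1"
        proof (cases "f = e")
          case True then show ?thesis by (simp add: k'_def)
        next
          case False
          then have "\<bar>k' f x\<bar> = \<bar>k f x\<bar> / k e x" using pos by (simp add: k'_def abs_divide)
          also have "\<dots> \<le> 1" using b pos by (simp add: divide_le_eq_1_pos)
          finally show ?thesis .
        qed
      qed
    qed
  qed
  show "k' e = (\<lambda>_. 1)" by (simp add: k'_def)
next
  fix f :: 'f assume fe: "f \<noteq> e"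
  have "(\<integral>x. k' f x \<partial>mu') = (\<integral>x. k e x *\<^sub>R k' f x \<partial>M)" by (rule dens_int) measurable
  also have "\<dots> = (\<integral>x. k f x \<partial>M)"
    by (rule integral_cong_AE) (use k'_ae in auto)
  also have "\<dots> = 0" using int_kf0[OF fe] .
  finally show "(\<integral>x. k' f x \<partial>mu') = 0" .
next
  fix v :: "'a \<Rightarrow> real"
  assume a: "continuous_on UNIV v \<and> (\<forall>x. 0 \<le> v x)"
  show "(\<lambda>f. (\<integral>x. v x * k' f x \<partial>mu')\<^sup>2) summable_on (UNIV - {e})" using H_v[OF a] by blast
next
  fix v :: "'a \<Rightarrow> real"
  assume a: "continuous_on UNIV v \<and> (\<forall>x. 0 \<le> v x)"
  show "infsum (\<lambda>f. (\<integral>x. v x * k' f x \<partial>mu')\<^sup>2) (UNIV - {e}) \<le> (\<integral>x. v x \<partial>mu')\<^sup>2" using H_v[OF a] by blast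
qed

end

context tsetup begin

definition F0 where "F0 = {f. (\<integral>x. (k f x)\<^sup>2 \<partial>M) \<noteq> 0}"

lemma F0_zero: "f \<notin> F0 \<Longrightarrow> AE x in M. k f x = 0"
proof -
  assume "f \<notin> F0"
  then have "(\<integral>x. (k f x)\<^sup>2 \<partial>M) = 0" unfolding F0_def by simp
  then have "AE x in M. (k f x)\<^sup>2 = 0" using integral_nonneg_eq_0_iff_AE[OF int_k2] by simp
  then show ?thesis by simp
qed

lemma e_F0: "e \<in> F0"
proof (rule ccontr)
  assume "e \<notin> F0"
  then have "AE x in M. k e x = 0" by (rule F0_zero)
  then have "(\<integral>x. k e x \<partial>M) = (\<integral>x. 0 \<partial>M)" by (intro integral_cong_AE) auto
  then show False using int_ke1 by simp
qed

lemma sq_sum_bound: "AE x in M. \<forall>G. finite G \<longrightarrow> (\<Sum>f\<in>G. (k f x)\<^sup>2) \<le> 2 * (k e x)\<^sup>2"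
  using good
proof eventually_elim
  case (elim x)
  have H: "\<And>H. finite H \<Longrightarrow> H \<subseteq> UNIV - {e} \<Longrightarrow> (\<Sum>f\<in>H. (k f x)\<^sup>2) \<le> (k e x)\<^sup>2"
    using elim by auto
  show ?case
  proof (intro allI impI)
    fix G :: "'f set" assume G: "finite G"
    have "(\<Sum>f\<in>G. (k f x)\<^sup>2) \<le> (\<Sum>f\<in>insert e G. (k f x)\<^sup>2)"
      using G by (intro sum_mono2) auto
    also have "\<dots> = (k e x)\<^sup>2 + (\<Sum>f\<in>insert e G - {e}. (k f x)\<^sup>2)"
      using G by (subst sum.remove[of _ e]) auto
    also have "\<dots> \<le> (k e x)\<^sup>2 + (k e x)\<^sup>2" using H[of "insert e G - {e}"] G by auto
    finally show "(\<Sum>f\<in>G. (k f x)\<^sup>2) \<le> 2 * (k e x)\<^sup>2" by simp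
  qed
qed

lemma F0_countable: "countable F0"
proof -
  define C where "C = (\<integral>x. 2 * (k e x)\<^sup>2 \<partial>M)"
  have fin: "finite {f. (\<integral>x. (k f x)\<^sup>2 \<partial>M) > 1 / real (Suc n)}" for n
  proof -
    have "finite {f. (\<integral>x. (k f x)\<^sup>2 \<partial>M) > 1 / real (Suc n)} \<and>
          card {f. (\<integral>x. (k f x)\<^sup>2 \<partial>M) > 1 / real (Suc n)} \<le> nat \<lceil>real (Suc n) * C\<rceil>"
    proof (rule finite_if_finite_subsets_card_bdd)
      fix G assume G: "G \<subseteq> {f. (\<integral>x. (k f x)\<^sup>2 \<partial>M) > 1 / real (Suc n)}" "finite G"
      have "real (card G) * (1 / real (Suc n)) = (\<Sum>f\<in>G. 1 / real (Suc n))" by simp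
      also have "\<dots> \<le> (\<Sum>f\<in>G. (\<integral>x. (k f x)\<^sup>2 \<partial>M))"
        using G by (intro sum_mono) auto
      also have "\<dots> = (\<integral>x. (\<Sum>f\<in>G. (k f x)\<^sup>2) \<partial>M)"
        by (rule Bochner_Integration.integral_sum[symmetric]) (use int_k2 in auto)
      also have "\<dots> \<le> C" unfolding C_def
      proof (rule integral_mono_AE)
        show "integrable M (\<lambda>x. \<Sum>f\<in>G. (k f x)\<^sup>2)"
          by (rule Bochner_Integration.integrable_sum) (use int_k2 in auto)
        show "integrable M (\<lambda>x. 2 * (k e x)\<^sup>2)" using int_k2 by simp
        show "AE x in M. (\<Sum>f\<in>G. (k f x)\<^sup>2) \<le> 2 * (k e x)\<^sup>2"
          using sq_sum_bound by eventually_elim (use G in auto)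
      qed
      finally have "real (card G) \<le> real (Suc n) * C" by (simp add: field_simps)
      then show "card G \<le> nat \<lceil>real (Suc n) * C\<rceil>" by linarith
    qed
    then show ?thesis by blast
  qed
  have "F0 \<subseteq> (\<Union>n. {f. (\<integral>x. (k f x)\<^sup>2 \<partial>M) > 1 / real (Suc n)})"
  proof
    fix f assume "f \<in> F0"
    then have ne: "(\<integral>x. (k f x)\<^sup>2 \<partial>M) \<noteq> 0" unfolding F0_def by simp
    have "(\<integral>x. (k f x)\<^sup>2 \<partial>M) \<ge> 0" by (intro integral_nonneg_AE) auto
    then have pos: "(\<integral>x. (k f x)\<^sup>2 \<partial>M) > 0" using ne by linarith
    then obtain n where "inverse (real (Suc n)) < (\<integral>x. (k f x)\<^sup>2 \<partial>M)" using reals_Archimedean by blast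
    then show "f \<in> (\<Union>n. {f. (\<integral>x. (k f x)\<^sup>2 \<partial>M) > 1 / real (Suc n)})" by (auto simp: field_simps)
  qed
  moreover have "countable (\<Union>n. {f. (\<integral>x. (k f x)\<^sup>2 \<partial>M) > 1 / real (Suc n)})"
    using fin by (intro countable_UN) (auto intro: countable_finite)
  ultimately show ?thesis by (rule countable_subset)
qed

definition enum where "enum = from_nat_into F0"
definition S where "S N = insert e (enum ` {..<N})"

lemma S_fin: "finite (S N)" unfolding S_def by simp
lemma S_e: "e \<in> S N" unfolding S_def by simp
lemma S_card: "card (S N) \<le> Suc N"
proof -
  have "card (S N) \<le> Suc (card (enum ` {..<N}))" unfolding S_def by (rule card_insert_le_m1) auto
  also have "card (enum ` {..<N}) \<le> N" using card_image_le[of "{..<N}" enum] by simp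
  finally show ?thesis by simp
qed
lemma S_mono: "N \<le> N' \<Longrightarrow> S N \<subseteq> S N'" unfolding S_def by auto
lemma S_F0: "S N \<subseteq> F0"
  unfolding S_def enum_def using e_F0 from_nat_into[of F0] by auto
lemma F0_S: "f \<in> F0 \<Longrightarrow> \<exists>N. f \<in> S N"
proof -
  assume "f \<in> F0"
  then obtain n where "from_nat_into F0 n = f" using from_nat_into_surj[OF F0_countable] by blast
  then have "f \<in> S (Suc n)" unfolding S_def enum_def by auto
  then show ?thesis by blast
qed
lemma F0_S_fin: "finite H \<Longrightarrow> H \<subseteq> F0 \<Longrightarrow> \<exists>N. H \<subseteq> S N"
proof (induction H rule: finite_induct)
  case empty then show ?case by simp
next
  case (insert f H)
  then obtain N1 where N1: "H \<subseteq> S N1" by auto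
  have "f \<in> F0" using insert by auto
  then obtain N2 where N2: "f \<in> S N2" using F0_S by blast
  have "insert f H \<subseteq> S (max N1 N2)" using N1 N2 S_mono[of N1 "max N1 N2"] S_mono[of N2 "max N1 N2"] by auto
  then show ?case by blast
qed

end

definition rnd :: "nat \<Rightarrow> real \<Rightarrow> real" where
  "rnd N t = (if \<bar>t\<bar> \<le> real (Suc N) then real_of_int \<lfloor>t * real (Suc N)\<rfloor> / real (Suc N) else 0)"

lemma rnd_err: "\<bar>t\<bar> \<le> real (Suc N) \<Longrightarrow> \<bar>t - rnd N t\<bar> \<le> 1 / real (Suc N)"
proof -
  assume "\<bar>t\<bar> \<le> real (Suc N)"
  define n where "n = real (Suc N)"
  have n: "n > 0" unfolding n_def by simp
  have f1: "real_of_int \<lfloor>t * n\<rfloor> \<le> t * n" by (rule of_int_floor_le)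
  have f2: "t * n < real_of_int \<lfloor>t * n\<rfloor> + 1" by (rule real_of_int_floor_add_one_gt)
  have "rnd N t = real_of_int \<lfloor>t * n\<rfloor> / n" using \<open>\<bar>t\<bar> \<le> real (Suc N)\<close> unfolding rnd_def n_def by simp
  moreover have "\<bar>t - real_of_int \<lfloor>t * n\<rfloor> / n\<bar> \<le> 1 / n"
  proof -
    have eq: "t - real_of_int \<lfloor>t * n\<rfloor> / n = (t * n - real_of_int \<lfloor>t * n\<rfloor>) / n"
      using n by (simp add: field_simps)
    have "0 \<le> t - real_of_int \<lfloor>t * n\<rfloor> / n" unfolding eq using f1 n by simp
    moreover have "t - real_of_int \<lfloor>t * n\<rfloor> / n \<le> 1 / n" unfolding eq
      using f2 n by (intro divide_right_mono) linarith+
    ultimately show ?thesis by simp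
  qed
  ultimately show ?thesis unfolding n_def by simp
qed

lemma rnd_err2: "(t - rnd N t)\<^sup>2 \<le> t\<^sup>2 + (1 / real (Suc N))\<^sup>2"
proof (cases "\<bar>t\<bar> \<le> real (Suc N)")
  case True
  then have "\<bar>t - rnd N t\<bar> \<le> 1 / real (Suc N)" by (rule rnd_err)
  then have "(t - rnd N t)\<^sup>2 \<le> (1 / real (Suc N))\<^sup>2" by (metis abs_le_square_iff abs_of_nonneg divide_nonneg_nonneg of_nat_0_le_iff zero_le_one)
  then show ?thesis by (smt (verit) zero_le_power2)
next
  case False
  then show ?thesis unfolding rnd_def by simp
qed

lemma rnd_meas[measurable]:
  assumes [measurable]: "g \<in> borel_measurable M"
  shows "(\<lambda>x. rnd N (g x)) \<in> borel_measurable M"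
  unfolding rnd_def by measurable

lemma rnd_range: "finite (range (rnd N))"
proof -
  define n :: int where "n = int (Suc N)"
  have "range (rnd N) \<subseteq> insert 0 ((\<lambda>i. real_of_int i / real (Suc N)) ` {-(n*n) .. n*n})"
  proof
    fix y assume "y \<in> range (rnd N)"
    then obtain t where y: "y = rnd N t" by blast
    show "y \<in> insert 0 ((\<lambda>i. real_of_int i / real (Suc N)) ` {-(n*n) .. n*n})"
    proof (cases "\<bar>t\<bar> \<le> real (Suc N)")
      case False then show ?thesis using y unfolding rnd_def by simp
    next
      case True
      have nn: "real_of_int n = real (Suc N)" unfolding n_def by simp
      have b: "\<bar>t * real (Suc N)\<bar> \<le> real_of_int (n * n)"
        using True unfolding nn[symmetric] by (simp add: abs_mult mult_right_mono)
      have "\<lfloor>t * real (Suc N)\<rfloor> \<le> n * n" using b by (simp add: floor_le_iff; linarith)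
      moreover have "- (n * n) \<le> \<lfloor>t * real (Suc N)\<rfloor>" using b by (simp add: le_floor_iff; linarith)
      ultimately show ?thesis using y True unfolding rnd_def by auto
    qed
  qed
  then show ?thesis by (rule finite_subset) simp
qed

context tsetup begin

definition s where "s N x = (\<lambda>f. if f \<in> S N then rnd N (k f x) else 0)"
definition rho where "rho N x = L2_set (\<lambda>f. k f x - rnd N (k f x)) (S N)"
definition aa where "aa N x = (\<Sum>f\<in>S N - {e}. (k f x)\<^sup>2)"
definition Lk where "Lk x = lim (\<lambda>N. aa N x)"
definition R where "R N x = sqrt (Lk x - aa N x)"

lemma meas_rho[measurable]: "rho N \<in> borel_measurable M" unfolding rho_def L2_set_def by measurable
lemma meas_aa[measurable]: "aa N \<in> borel_measurable M" unfolding aa_def by measurable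
lemma meas_Lk[measurable]: "Lk \<in> borel_measurable M" unfolding Lk_def by (rule borel_measurable_lim_metric) simp
lemma meas_R[measurable]: "R N \<in> borel_measurable M" unfolding R_def by measurable
lemma meas_s[measurable]: "(\<lambda>x. s N x f) \<in> borel_measurable M" unfolding s_def by measurable

lemma rho_nonneg: "rho N x \<ge> 0" unfolding rho_def by (rule L2_set_nonneg)

definition goodx where "goodx x \<longleftrightarrow> k e x \<ge> 0 \<and> (\<forall>H. finite H \<longrightarrow> H \<subseteq> UNIV - {e} \<longrightarrow> (\<Sum>f\<in>H. (k f x)\<^sup>2) \<le> (k e x)\<^sup>2)
    \<and> (\<forall>f. \<bar>k f x\<bar> \<le> k e x) \<and> (\<forall>G. finite G \<longrightarrow> (\<Sum>f\<in>G. (k f x)\<^sup>2) \<le> 2 * (k e x)\<^sup>2)"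

lemma AE_goodx: "AE x in M. goodx x"
  using good good_abs sq_sum_bound unfolding goodx_def by eventually_elim auto

lemma aa_mono: "N \<le> N' \<Longrightarrow> aa N x \<le> aa N' x"
proof -
  assume "N \<le> N'"
  then have "S N - {e} \<subseteq> S N' - {e}" using S_mono by blast
  moreover have "finite (S N' - {e})" using S_fin by simp
  ultimately show ?thesis unfolding aa_def by (intro sum_mono2) auto
qed

lemma aa_bound: "goodx x \<Longrightarrow> aa N x \<le> (k e x)\<^sup>2"
proof -
  assume "goodx x"
  then have H: "\<And>H. finite H \<Longrightarrow> H \<subseteq> UNIV - {e} \<Longrightarrow> (\<Sum>f\<in>H. (k f x)\<^sup>2) \<le> (k e x)\<^sup>2"
    unfolding goodx_def by blast
  show ?thesis unfolding aa_def by (rule H) (use S_fin in auto)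
qed

lemma aa_lim: "goodx x \<Longrightarrow> (\<lambda>N. aa N x) \<longlonglongrightarrow> Lk x"
proof -
  assume g: "goodx x"
  have "incseq (\<lambda>N. aa N x)" by (rule incseq_SucI) (rule aa_mono, simp)
  moreover have "bdd_above (range (\<lambda>N. aa N x))" using aa_bound[OF g] by (auto simp: bdd_above_def)
  ultimately have "convergent (\<lambda>N. aa N x)" using LIMSEQ_incseq_SUP convergent_def by blast
  then show ?thesis unfolding Lk_def by (rule convergent_LIMSEQ_iff[THEN iffD1])
qed

lemma aa_le_Lk: "goodx x \<Longrightarrow> aa N x \<le> Lk x"
  by (rule incseq_le[OF _ aa_lim]) (auto intro!: incseq_SucI aa_mono)

lemma Lk_bound: "goodx x \<Longrightarrow> Lk x \<le> (k e x)\<^sup>2"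
  by (rule LIMSEQ_le_const2[OF aa_lim]) (auto intro: aa_bound)

lemma R_bound: "goodx x \<Longrightarrow> R N x \<le> k e x"
proof -
  assume g: "goodx x"
  have "Lk x - aa N x \<le> (k e x)\<^sup>2"
  proof -
    have "aa N x \<ge> 0" unfolding aa_def by (intro sum_nonneg) auto
    then show ?thesis using Lk_bound[OF g] by linarith
  qed
  then have "R N x \<le> sqrt ((k e x)\<^sup>2)" unfolding R_def by (rule real_sqrt_le_mono)
  then show ?thesis using g unfolding goodx_def by simp
qed

lemma R_nonneg: "goodx x \<Longrightarrow> R N x \<ge> 0"
  unfolding R_def using aa_le_Lk by simp

lemma R_lim: "goodx x \<Longrightarrow> (\<lambda>N. R N x) \<longlonglongrightarrow> 0"
proof -
  assume g: "goodx x"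
  have "(\<lambda>N. Lk x - aa N x) \<longlonglongrightarrow> Lk x - Lk x" by (intro tendsto_intros aa_lim[OF g])
  then have "(\<lambda>N. sqrt (Lk x - aa N x)) \<longlonglongrightarrow> sqrt (Lk x - Lk x)" by (rule tendsto_real_sqrt)
  then show ?thesis unfolding R_def by simp
qed

lemma rho_sq: "(rho N x)\<^sup>2 = (\<Sum>f\<in>S N. (k f x - rnd N (k f x))\<^sup>2)"
  unfolding rho_def L2_set_def by (simp add: sum_nonneg)

lemma rho_bound: "goodx x \<Longrightarrow> rho N x \<le> 2 * \<bar>k e x\<bar> + 1"
proof -
  assume g: "goodx x"
  have "(rho N x)\<^sup>2 \<le> (\<Sum>f\<in>S N. (k f x)\<^sup>2 + (1 / real (Suc N))\<^sup>2)"
    unfolding rho_sq by (intro sum_mono rnd_err2)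
  also have "\<dots> = (\<Sum>f\<in>S N. (k f x)\<^sup>2) + real (card (S N)) * (1 / real (Suc N))\<^sup>2"
    by (simp add: sum.distrib)
  also have "\<dots> \<le> 2 * (k e x)\<^sup>2 + 1"
  proof -
    have "(\<Sum>f\<in>S N. (k f x)\<^sup>2) \<le> 2 * (k e x)\<^sup>2" using g S_fin unfolding goodx_def by blast
    moreover have "real (card (S N)) * (1 / real (Suc N))\<^sup>2 \<le> 1"
    proof -
      have "real (card (S N)) \<le> real (Suc N)" using S_card[of N] by (simp only: of_nat_le_iff)
      then have "real (card (S N)) * (1 / real (Suc N))\<^sup>2 \<le> real (Suc N) * (1 / real (Suc N))\<^sup>2"
        by (intro mult_right_mono) auto
      also have "\<dots> = 1 / real (Suc N)" by (simp add: power2_eq_square)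
      also have "\<dots> \<le> 1" by simp
      finally show ?thesis .
    qed
    ultimately show ?thesis by linarith
  qed
  also have "\<dots> \<le> (2 * \<bar>k e x\<bar> + 1)\<^sup>2" by (simp add: power2_eq_square algebra_simps)
  finally have "(rho N x)\<^sup>2 \<le> (2 * \<bar>k e x\<bar> + 1)\<^sup>2" .
  then show ?thesis using rho_nonneg by (meson abs_ge_zero add_nonneg_nonneg mult_nonneg_nonneg power2_le_imp_le zero_le_numeral zero_le_one)
qed

lemma rho_small: "goodx x \<Longrightarrow> k e x \<le> real (Suc N) \<Longrightarrow> rho N x \<le> sqrt (inverse (real (Suc N)))"
proof -
  assume g: "goodx x" and N: "k e x \<le> real (Suc N)"
  have "(rho N x)\<^sup>2 \<le> (\<Sum>f\<in>S N. (1 / real (Suc N))\<^sup>2)"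
    unfolding rho_sq
  proof (rule sum_mono)
    fix f
    have "\<bar>k f x\<bar> \<le> real (Suc N)" using g N unfolding goodx_def by (meson order_trans)
    then have "\<bar>k f x - rnd N (k f x)\<bar> \<le> 1 / real (Suc N)" by (rule rnd_err)
    then show "(k f x - rnd N (k f x))\<^sup>2 \<le> (1 / real (Suc N))\<^sup>2"
      by (metis abs_le_square_iff abs_of_nonneg divide_nonneg_nonneg of_nat_0_le_iff zero_le_one)
  qed
  also have "\<dots> = real (card (S N)) * (1 / real (Suc N))\<^sup>2" by simp
  also have "\<dots> \<le> real (Suc N) * (1 / real (Suc N))\<^sup>2"
    using S_card[of N] by (intro mult_right_mono) (simp only: of_nat_le_iff, simp)
  also have "\<dots> = inverse (real (Suc N))" by (simp add: power2_eq_square divide_inverse)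
  finally have "(rho N x)\<^sup>2 \<le> inverse (real (Suc N))" .
  then have "sqrt ((rho N x)\<^sup>2) \<le> sqrt (inverse (real (Suc N)))" by (rule real_sqrt_le_mono)
  then show ?thesis using rho_nonneg by simp
qed

lemma rho_lim: "goodx x \<Longrightarrow> (\<lambda>N. rho N x) \<longlonglongrightarrow> 0"
proof -
  assume g: "goodx x"
  have ev: "eventually (\<lambda>N. norm (rho N x) \<le> sqrt (inverse (real (Suc N)))) sequentially"
  proof -
    obtain N0 :: nat where "k e x \<le> real N0" using real_arch_simple by blast
    then show ?thesis unfolding eventually_sequentially
      by (intro exI[of _ N0] allI impI) (use rho_small[OF g] rho_nonneg in auto)
  qed
  have "(\<lambda>N. sqrt (inverse (real (Suc N)))) \<longlonglongrightarrow> sqrt 0"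
    by (intro tendsto_real_sqrt LIMSEQ_inverse_real_of_nat)
  then show ?thesis using Lim_null_comparison[OF ev] by simp
qed

definition delta where "delta N = (\<integral>x. rho N x \<partial>M) + (\<integral>x. R N x \<partial>M)"

lemma int_dom: "integrable M (\<lambda>x. 2 * \<bar>k e x\<bar> + 1)"
proof -
  interpret prob_space M by (rule prob)
  show ?thesis using int_k[of e] by simp
qed

lemma int_rho: "integrable M (rho N)"
  by (rule Bochner_Integration.integrable_bound[of _ "\<lambda>x. 2 * \<bar>k e x\<bar> + 1"])
     (use int_dom AE_goodx rho_bound rho_nonneg in \<open>auto elim!: eventually_mono\<close>)

lemma int_R: "integrable M (R N)"
  by (rule Bochner_Integration.integrable_bound[of _ "\<lambda>x. k e x"])
     (use int_k AE_goodx in \<open>auto elim!: eventually_mono\<close>, metis R_bound R_nonneg abs_of_nonneg order_trans)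

lemma delta_lim: "delta \<longlonglongrightarrow> 0"
proof -
  have 1: "(\<lambda>N. \<integral>x. rho N x \<partial>M) \<longlonglongrightarrow> (\<integral>x. 0 \<partial>M)"
  proof (rule integral_dominated_convergence[where w = "\<lambda>x. 2 * \<bar>k e x\<bar> + 1"])
    show "integrable M (\<lambda>x. 2 * \<bar>k e x\<bar> + 1)" by (rule int_dom)
    show "AE x in M. (\<lambda>N. rho N x) \<longlonglongrightarrow> 0" using AE_goodx by eventually_elim (rule rho_lim)
    show "\<And>N. AE x in M. norm (rho N x) \<le> 2 * \<bar>k e x\<bar> + 1"
      using AE_goodx by eventually_elim (use rho_bound rho_nonneg in auto)
  qed auto
  have 2: "(\<lambda>N. \<integral>x. R N x \<partial>M) \<longlonglongrightarrow> (\<integral>x. 0 \<partial>M)"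
  proof (rule integral_dominated_convergence[where w = "\<lambda>x. k e x"])
    show "integrable M (\<lambda>x. k e x)" using int_k by simp
    show "AE x in M. (\<lambda>N. R N x) \<longlonglongrightarrow> 0" using AE_goodx by eventually_elim (rule R_lim)
    show "\<And>N. AE x in M. norm (R N x) \<le> k e x"
      using AE_goodx by eventually_elim (use R_bound R_nonneg in auto)
  qed auto
  show ?thesis unfolding delta_def using tendsto_add[OF 1 2] by simp
qed

end

lemma L2_le_sqrt: "(\<Sum>i\<in>A. (g i)\<^sup>2) \<le> b \<Longrightarrow> L2_set g A \<le> sqrt b"
  unfolding L2_set_def by (rule real_sqrt_le_mono)

lemma L2_set_minus_swap: "L2_set (\<lambda>i. a i - b i) A = L2_set (\<lambda>i. b i - a i) A"
  unfolding L2_set_def by (intro arg_cong[where f=sqrt] sum.cong refl) (rule power2_commute)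

lemma L2_set_triangle3: "L2_set (\<lambda>i. a i + b i + c i) A \<le> L2_set a A + L2_set b A + L2_set c A"
proof -
  have "L2_set (\<lambda>i. a i + b i + c i) A \<le> L2_set (\<lambda>i. a i + b i) A + L2_set c A"
    by (rule L2_set_triangle_ineq)
  also have "\<dots> \<le> L2_set a A + L2_set b A + L2_set c A"
    using L2_set_triangle_ineq[of a b A] by simp
  finally show ?thesis .
qed

context tsetup begin

lemma delta_nonneg: "delta N \<ge> 0"
proof -
  have "(\<integral>x. rho N x \<partial>M) \<ge> 0" by (intro integral_nonneg_AE) (auto simp: rho_nonneg)
  moreover have "(\<integral>x. R N x \<partial>M) \<ge> 0"
    by (intro integral_nonneg_AE) (use AE_goodx in \<open>auto elim!: eventually_mono intro: R_nonneg\<close>)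
  ultimately show ?thesis unfolding delta_def by simp
qed

definition Nj where "Nj j = (LEAST N. \<forall>N'\<ge>N. delta N' \<le> (1/2)^j)"

lemma Nj_ex: "\<exists>N. \<forall>N'\<ge>N. delta N' \<le> (1/2::real)^j"
proof -
  have "eventually (\<lambda>N. delta N < (1/2::real)^j) sequentially"
    by (rule order_tendstoD(2)[OF delta_lim]) simp
  then show ?thesis unfolding eventually_sequentially by (meson less_imp_le)
qed

lemma Nj_prop: "N' \<ge> Nj j \<Longrightarrow> delta N' \<le> (1/2)^j"
  using LeastI_ex[OF Nj_ex[of j]] unfolding Nj_def by blast

lemma Nj_mono: "j \<le> j' \<Longrightarrow> Nj j \<le> Nj j'"
proof -
  assume jj: "j \<le> j'"
  have "\<forall>N'\<ge>Nj j'. delta N' \<le> (1/2::real)^j"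
  proof (intro allI impI)
    fix N' assume "N' \<ge> Nj j'"
    then have "delta N' \<le> (1/2)^j'" by (rule Nj_prop)
    also have "\<dots> \<le> (1/2)^j" using jj by (intro power_decreasing) auto
    finally show "delta N' \<le> (1/2)^j" .
  qed
  then show ?thesis unfolding Nj_def by (rule Least_le)
qed

lemma s_diff:
  assumes NN: "N \<le> N'" and g: "goodx x"
  shows "L2_set (\<lambda>f. s N' x f - s N x f) (S N') \<le> rho N' x + rho N x + R N x"
proof -
  define A where "A f = rnd N' (k f x) - k f x" for f
  define B where "B f = (if f \<in> S N then 0 else k f x)" for f
  define C where "C f = (if f \<in> S N then k f x - rnd N (k f x) else 0)" for f
  have sub: "S N \<subseteq> S N'" using S_mono[OF NN] .
  have "L2_set (\<lambda>f. s N' x f - s N x f) (S N') = L2_set (\<lambda>f. A f + B f + C f) (S N')"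
    by (rule L2_set_cong) (use sub in \<open>auto simp: s_def A_def B_def C_def\<close>)
  also have "\<dots> \<le> L2_set A (S N') + L2_set B (S N') + L2_set C (S N')" by (rule L2_set_triangle3)
  also have "L2_set A (S N') = rho N' x"
    unfolding rho_def A_def by (rule L2_set_minus_swap)
  also have "L2_set C (S N') = rho N x"
  proof -
    have "L2_set C (S N') = sqrt (\<Sum>f\<in>S N. (C f)\<^sup>2)"
      unfolding L2_set_def by (subst sum.mono_neutral_right[OF S_fin sub]) (auto simp: C_def)
    also have "\<dots> = rho N x" unfolding rho_def L2_set_def C_def by simp
    finally show ?thesis .
  qed
  also have "L2_set B (S N') \<le> R N x"
  proof -
    have "(\<Sum>f\<in>S N'. (B f)\<^sup>2) = (\<Sum>f\<in>S N' - S N. (k f x)\<^sup>2)"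
    proof -
      have "(\<Sum>f\<in>S N'. (B f)\<^sup>2) = (\<Sum>f\<in>S N' - S N. (B f)\<^sup>2)"
        by (rule sum.mono_neutral_right) (use S_fin in \<open>auto simp: B_def\<close>)
      then show ?thesis by (simp add: B_def)
    qed
    also have "\<dots> = aa N' x - aa N x"
    proof -
      have e1: "S N' - S N = (S N' - {e}) - (S N - {e})" using S_e by auto
      show ?thesis unfolding aa_def e1 by (rule sum_diff) (use S_fin sub in auto)
    qed
    also have "\<dots> \<le> Lk x - aa N x" using aa_le_Lk[OF g] by simp
    finally show ?thesis unfolding R_def by (rule L2_le_sqrt)
  qed
  finally show ?thesis by simp
qed

lemma k_minus_s:
  assumes H: "finite H"
  shows "AE x in M. L2_set (\<lambda>f. k f x - s N x f) H \<le> rho N x + R N x"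
proof -
  have "AE x in M. \<forall>f\<in>H - F0. k f x = 0"
    by (rule AE_finite_allI) (use H F0_zero in auto)
  with AE_goodx show ?thesis
  proof eventually_elim
    case (elim x)
    have g: "goodx x" and z: "\<And>f. f \<in> H - F0 \<Longrightarrow> k f x = 0" using elim by auto
    obtain N1 where N1: "H \<inter> F0 \<subseteq> S N1" using F0_S_fin[of "H \<inter> F0"] H by auto
    define N' where "N' = max N N1"
    have NN: "N \<le> N'" and HS: "H \<inter> F0 \<subseteq> S N'" using N1 S_mono[of N1 N'] unfolding N'_def by auto
    define B where "B f = (if f \<in> S N then 0 else k f x)" for f
    define C where "C f = (if f \<in> S N then k f x - rnd N (k f x) else 0)" for f
    have "L2_set (\<lambda>f. k f x - s N x f) H = L2_set (\<lambda>f. C f + B f) H"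
      by (rule L2_set_cong) (auto simp: s_def B_def C_def)
    also have "\<dots> \<le> L2_set C H + L2_set B H" by (rule L2_set_triangle_ineq)
    also have "L2_set C H \<le> rho N x"
    proof -
      have "(\<Sum>f\<in>H. (C f)\<^sup>2) = (\<Sum>f\<in>H \<inter> S N. (k f x - rnd N (k f x))\<^sup>2)"
        by (rule sum.mono_neutral_cong_right) (use H in \<open>auto simp: C_def\<close>)
      also have "\<dots> \<le> (\<Sum>f\<in>S N. (k f x - rnd N (k f x))\<^sup>2)"
        by (rule sum_mono2) (use S_fin in auto)
      also have "\<dots> = (rho N x)\<^sup>2" by (rule rho_sq[symmetric])
      finally have "L2_set C H \<le> sqrt ((rho N x)\<^sup>2)" by (rule L2_le_sqrt)
      then show ?thesis using rho_nonneg by simp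
    qed
    also have "L2_set B H \<le> R N x"
    proof -
      have "(\<Sum>f\<in>H. (B f)\<^sup>2) = (\<Sum>f\<in>(H \<inter> F0) - S N. (k f x)\<^sup>2)"
        by (rule sum.mono_neutral_cong_right) (use H z in \<open>auto simp: B_def\<close>)
      also have "\<dots> \<le> (\<Sum>f\<in>S N' - S N. (k f x)\<^sup>2)"
        by (rule sum_mono2) (use S_fin HS in auto)
      also have "\<dots> = aa N' x - aa N x"
      proof -
        have sub: "S N \<subseteq> S N'" using S_mono[OF NN] .
        have e1: "S N' - S N = (S N' - {e}) - (S N - {e})" using S_e by auto
        show ?thesis unfolding aa_def e1 by (rule sum_diff) (use S_fin sub in auto)
      qed
      also have "\<dots> \<le> Lk x - aa N x" using aa_le_Lk[OF g] by simp
      finally show ?thesis unfolding R_def by (rule L2_le_sqrt)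
    qed
    finally show ?case by simp
  qed
qed

end

context tsetup begin

definition t where "t j x = (if j = 0 then (\<lambda>_. 0) else s (Nj (j - 1)) x)"
definition Z where "Z j x = (t (Suc j) x, t j x)"
definition V where "V j = Z j ` space M"
definition A where "A j p = {x \<in> space M. Z j x = p}"
definition SS where "SS j = S (Nj j)"
definition dd :: "('f \<Rightarrow> real) \<times> ('f \<Rightarrow> real) \<Rightarrow> 'f \<Rightarrow> real" where "dd p = (\<lambda>f. fst p f - snd p f)"
definition yv where "yv p = (\<lambda>f. complex_of_real (dd p f))"

lemma t_Suc: "t (Suc j) x = s (Nj j) x" unfolding t_def by simp

lemma s_range: "finite (range (s N))"
proof -
  have "range (s N) \<subseteq> {w. \<forall>f. (f \<in> S N \<longrightarrow> w f \<in> range (rnd N)) \<and> (f \<notin> S N \<longrightarrow> w f = 0)}"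
    unfolding s_def by auto
  moreover have "finite {w. \<forall>f. (f \<in> S N \<longrightarrow> w f \<in> range (rnd N)) \<and> (f \<notin> S N \<longrightarrow> w f = 0)}"
    by (rule finite_set_of_finite_funs) (auto simp: S_fin rnd_range)
  ultimately show ?thesis by (rule finite_subset)
qed

lemma t_range: "finite (range (t j))"
proof (cases j)
  case 0
  then have "range (t j) = {\<lambda>_. 0}" unfolding t_def by auto
  then show ?thesis by simp
next
  case (Suc i)
  then show ?thesis unfolding t_def using s_range by simp
qed

lemma V_fin: "finite (V j)"
proof -
  have "V j \<subseteq> range (t (Suc j)) \<times> range (t j)" unfolding V_def Z_def by auto
  then show ?thesis by (rule finite_subset) (simp add: t_range)
qed

lemma t_supp: "f \<notin> SS j \<Longrightarrow> t (Suc j) x f = 0" "f \<notin> SS j \<Longrightarrow> t j x f = 0"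
proof -
  assume f: "f \<notin> SS j"
  then show "t (Suc j) x f = 0" unfolding t_def s_def SS_def by simp
  show "t j x f = 0"
  proof (cases j)
    case 0 then show ?thesis unfolding t_def by simp
  next
    case (Suc i)
    have "S (Nj i) \<subseteq> S (Nj j)" using Suc by (intro S_mono Nj_mono) simp
    then show ?thesis using f Suc unfolding t_def s_def SS_def by auto
  qed
qed

lemma dd_supp: "p \<in> V j \<Longrightarrow> f \<notin> SS j \<Longrightarrow> dd p f = 0"
  unfolding V_def Z_def dd_def using t_supp by auto

lemma sets_s_eq: "{x \<in> space M. s N x = w} \<in> sets M"
proof (cases "\<forall>f. f \<notin> S N \<longrightarrow> w f = 0")
  case True
  have "{x \<in> space M. s N x = w} = {x \<in> space M. \<forall>f\<in>S N. rnd N (k f x) = w f}"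
    using True unfolding s_def by (auto simp: fun_eq_iff)
  also have "\<dots> \<in> sets M" by (rule sets.sets_Collect_finite_All) (auto simp: S_fin)
  finally show ?thesis .
next
  case False
  then have e: "{x \<in> space M. s N x = w} = {}" unfolding s_def by (auto simp: fun_eq_iff)
  show ?thesis unfolding e by simp
qed

lemma sets_t_eq: "{x \<in> space M. t j x = w} \<in> sets M"
proof (cases j)
  case 0
  show ?thesis
  proof (cases "(\<lambda>_. 0) = w")
    case True
    then have e: "{x \<in> space M. t j x = w} = space M" using 0 unfolding t_def by auto
    show ?thesis unfolding e by simp
  next
    case False
    then have e: "{x \<in> space M. t j x = w} = {}" using 0 unfolding t_def by auto
    show ?thesis unfolding e by simp
  qed
next
  case (Suc i)
  then show ?thesis unfolding t_def using sets_s_eq by simp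
qed

lemma sets_A: "A j p \<in> sets M"
proof -
  have "A j p = {x \<in> space M. t (Suc j) x = fst p} \<inter> {x \<in> space M. t j x = snd p}"
    unfolding A_def Z_def by (cases p) auto
  then show ?thesis using sets_t_eq by simp
qed

lemma sum_ind_single:
  fixes c :: "_ \<Rightarrow> 'b::comm_ring_1"
  assumes x: "x \<in> space M"
  shows "(\<Sum>p\<in>V j. indicator (A j p) x * c p) = c (Z j x)"
proof -
  have Zx: "Z j x \<in> V j" using x unfolding V_def by simp
  have "(\<Sum>p\<in>V j. indicator (A j p) x * c p) = (\<Sum>p\<in>V j. if p = Z j x then c p else 0)"
    by (rule sum.cong) (auto simp: A_def x)
  also have "\<dots> = c (Z j x)" using Zx V_fin by simp
  finally show ?thesis .
qed

lemma int_ind: "integrable M (indicator (A j p) :: 'a \<Rightarrow> real)"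
proof -
  interpret prob_space M by (rule prob)
  show ?thesis using sets_A[of j p] by (simp add: integrable_indicator_iff sets.Int_space_eq2 less_top[symmetric])
qed

lemma block_mass:
  "(\<Sum>p\<in>V j. Sigma_Algebra.measure M (A j p) * L2_set (dd p) (SS j))
     = (\<integral>x. L2_set (\<lambda>f. t (Suc j) x f - t j x f) (SS j) \<partial>M)"
proof -
  have "(\<integral>x. L2_set (\<lambda>f. t (Suc j) x f - t j x f) (SS j) \<partial>M)
      = (\<integral>x. (\<Sum>p\<in>V j. indicator (A j p) x * L2_set (dd p) (SS j)) \<partial>M)"
    by (rule Bochner_Integration.integral_cong[OF refl]) (simp add: sum_ind_single dd_def Z_def)
  also have "\<dots> = (\<Sum>p\<in>V j. \<integral>x. indicator (A j p) x * L2_set (dd p) (SS j) \<partial>M)"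
    by (rule Bochner_Integration.integral_sum) (use int_ind in auto)
  also have "\<dots> = (\<Sum>p\<in>V j. Sigma_Algebra.measure M (A j p) * L2_set (dd p) (SS j))"
    using sets_A by (simp add: sets.Int_space_eq2)
  finally show ?thesis by simp
qed

lemma int_v_ind:
  fixes v :: "'a \<Rightarrow> complex"
  assumes cv: "continuous_on UNIV v"
  shows "integrable M (\<lambda>x. v x * indicator (A j p) x)"
proof -
  interpret prob_space M by (rule prob)
  have [measurable]: "v \<in> borel_measurable M" using meas_cont[OF cv] .
  have [measurable]: "A j p \<in> sets M" by (rule sets_A)
  show ?thesis
  proof (rule Bochner_Integration.integrable_bound[of _ "\<lambda>x. sup_norm v"])
    show "integrable M (\<lambda>x. sup_norm v)" by simp
    show "(\<lambda>x. v x * indicator (A j p) x) \<in> borel_measurable M" by measurable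
    show "AE x in M. norm (v x * indicator (A j p) x) \<le> norm (sup_norm v)"
    proof (rule AE_I2)
      fix x
      have "norm (v x * indicator (A j p) x) \<le> cmod (v x)" by (simp add: indicator_def)
      also have "\<dots> \<le> sup_norm v" by (rule sup_norm_bound[OF cv])
      finally show "norm (v x * indicator (A j p) x) \<le> norm (sup_norm v)" using sup_norm_nonneg[OF cv] by simp
    qed
  qed
qed

end

lemma sum_nth_distinct:
  assumes "distinct xs"
  shows "(\<Sum>r<length xs. g (xs ! r)) = sum g (set xs)"
proof -
  have "(\<Sum>r<length xs. g (xs ! r)) = sum_list (map g xs)"
    by (simp add: sum_list_sum_nth atLeast0LessThan)
  also have "\<dots> = sum g (set xs)" using sum.distinct_set_conv_list[OF assms, of g] by (rule sym)
  finally show ?thesis .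
qed

context tsetup begin

definition Lst where "Lst j = (SOME xs. set xs = V j \<and> distinct xs)"
lemma Lst: "set (Lst j) = V j" "distinct (Lst j)"
  using someI_ex[OF finite_distinct_list[OF V_fin[of j]]] unfolding Lst_def by auto

definition len where "len j = length (Lst j)"
definition jj where "jj n = fst (prod_decode n)"
definition rr where "rr n = snd (prod_decode n)"
definition valid where "valid n \<longleftrightarrow> rr n < len (jj n)"
definition pc where "pc n = Lst (jj n) ! rr n"
definition phi where "phi n v = (if valid n then (\<integral>x. v x * indicator (A (jj n) (pc n)) x \<partial>M) else 0)"
definition yn where "yn n = (if valid n then yv (pc n) else (\<lambda>_. 0))"
definition cn where "cn n = (if valid n then Sigma_Algebra.measure M (A (jj n) (pc n)) else 0)"
definition BJ where "BJ J = prod_encode ` (SIGMA j:{..J}. {..<len j})"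

lemma pc_V: "valid n \<Longrightarrow> pc n \<in> V (jj n)"
  unfolding valid_def pc_def len_def using Lst(1) nth_mem by blast

lemma BJ_fin: "finite (BJ J)" unfolding BJ_def by auto

lemma jj_le: "jj n \<le> n"
  unfolding jj_def using le_prod_encode_1[of "fst (prod_decode n)" "snd (prod_decode n)"] by simp

lemma BJ_iff: "n \<in> BJ J \<longleftrightarrow> valid n \<and> jj n \<le> J"
proof
  assume "n \<in> BJ J"
  then obtain j r where "n = prod_encode (j, r)" "j \<le> J" "r < len j" unfolding BJ_def by auto
  then show "valid n \<and> jj n \<le> J" unfolding valid_def jj_def rr_def by simp
next
  assume a: "valid n \<and> jj n \<le> J"
  have "n = prod_encode (jj n, rr n)" unfolding jj_def rr_def by simp
  then show "n \<in> BJ J" unfolding BJ_def using a unfolding valid_def by auto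
qed

lemma sum_BJ:
  "(\<Sum>n\<in>BJ J. h (jj n) (pc n)) = (\<Sum>j\<le>J. \<Sum>p\<in>V j. h j p)"
proof -
  have "(\<Sum>n\<in>BJ J. h (jj n) (pc n)) = (\<Sum>x\<in>(SIGMA j:{..J}. {..<len j}). h (jj (prod_encode x)) (pc (prod_encode x)))"
    unfolding BJ_def by (rule sum.reindex[unfolded o_def]) (rule inj_prod_encode)
  also have "\<dots> = (\<Sum>(j,r)\<in>(SIGMA j:{..J}. {..<len j}). h j (Lst j ! r))"
    by (rule sum.cong) (auto simp: jj_def pc_def rr_def)
  also have "\<dots> = (\<Sum>j\<le>J. \<Sum>r<len j. h j (Lst j ! r))"
    by (rule sum.Sigma[symmetric]) auto
  also have "\<dots> = (\<Sum>j\<le>J. \<Sum>p\<in>V j. h j p)"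
    unfolding len_def by (intro sum.cong refl) (simp add: sum_nth_distinct Lst)
  finally show ?thesis .
qed

definition mass where "mass j = (\<Sum>p\<in>V j. Sigma_Algebra.measure M (A j p) * L2_set (dd p) (SS j))"

lemma yv_l2: "p \<in> V j \<Longrightarrow> yv p \<in> l2 \<and> l2_norm (yv p) = L2_set (dd p) (SS j)"
proof -
  assume p: "p \<in> V j"
  have z: "\<And>f. f \<notin> SS j \<Longrightarrow> yv p f = 0" unfolding yv_def using dd_supp[OF p] by simp
  have fin: "finite (SS j)" unfolding SS_def by (rule S_fin)
  have "l2_norm (yv p) = L2_set (\<lambda>f. cmod (yv p f)) (SS j)" by (rule l2_finsupp(2)[OF fin z])
  also have "\<dots> = L2_set (dd p) (SS j)" unfolding yv_def L2_set_def by simp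
  finally show ?thesis using l2_finsupp(1)[OF fin z] by simp
qed

lemma yn_l2: "yn n \<in> l2"
proof (cases "valid n")
  case True then show ?thesis unfolding yn_def using yv_l2[OF pc_V[OF True]] by simp
next
  case False
  have "yn n \<in> l2" unfolding yn_def using False l2_finsupp(1)[of "{}" "\<lambda>_. 0"] by simp
  then show ?thesis .
qed

lemma sum_BJ_mass: "(\<Sum>n\<in>BJ J. cn n * l2_norm (yn n)) = (\<Sum>j\<le>J. mass j)"
proof -
  have "(\<Sum>n\<in>BJ J. cn n * l2_norm (yn n))
      = (\<Sum>n\<in>BJ J. Sigma_Algebra.measure M (A (jj n) (pc n)) * l2_norm (yv (pc n)))"
    by (rule sum.cong) (auto simp: BJ_iff cn_def yn_def)
  also have "\<dots> = (\<Sum>j\<le>J. \<Sum>p\<in>V j. Sigma_Algebra.measure M (A j p) * l2_norm (yv p))"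
    by (rule sum_BJ)
  also have "\<dots> = (\<Sum>j\<le>J. mass j)"
    unfolding mass_def by (intro sum.cong refl) (simp add: yv_l2)
  finally show ?thesis .
qed

lemma block_v:
  fixes v :: "'a \<Rightarrow> complex"
  assumes cv: "continuous_on UNIV v"
  shows "(\<Sum>p\<in>V j. (\<integral>x. v x * indicator (A j p) x \<partial>M) * yv p f)
      = (\<integral>x. v x * complex_of_real (t (Suc j) x f - t j x f) \<partial>M)"
    "integrable M (\<lambda>x. v x * complex_of_real (t (Suc j) x f - t j x f))"
proof -
  have eq: "\<And>x. x \<in> space M \<Longrightarrow> v x * complex_of_real (t (Suc j) x f - t j x f)
      = (\<Sum>p\<in>V j. v x * indicator (A j p) x * yv p f)"
  proof -
    fix x assume x: "x \<in> space M"
    have "(\<Sum>p\<in>V j. v x * indicator (A j p) x * yv p f) = v x * (\<Sum>p\<in>V j. indicator (A j p) x * yv p f)"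
      by (simp add: sum_distrib_left ac_simps)
    also have "\<dots> = v x * yv (Z j x) f" by (simp only: sum_ind_single[OF x])
    also have "\<dots> = v x * complex_of_real (t (Suc j) x f - t j x f)" by (simp add: yv_def dd_def Z_def)
    finally show "v x * complex_of_real (t (Suc j) x f - t j x f) = (\<Sum>p\<in>V j. v x * indicator (A j p) x * yv p f)" by simp
  qed
  have ii: "\<And>p. integrable M (\<lambda>x. v x * indicator (A j p) x * yv p f)"
    using int_v_ind[OF cv] by simp
  have i2: "integrable M (\<lambda>x. \<Sum>p\<in>V j. v x * indicator (A j p) x * yv p f)"
    by (rule Bochner_Integration.integrable_sum) (use ii in auto)
  show "integrable M (\<lambda>x. v x * complex_of_real (t (Suc j) x f - t j x f))"
    by (rule Bochner_Integration.integrable_cong[THEN iffD2, OF refl _ i2]) (rule eq)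
  have "(\<integral>x. v x * complex_of_real (t (Suc j) x f - t j x f) \<partial>M)
      = (\<integral>x. (\<Sum>p\<in>V j. v x * indicator (A j p) x * yv p f) \<partial>M)"
    by (rule Bochner_Integration.integral_cong[OF refl]) (rule eq)
  also have "\<dots> = (\<Sum>p\<in>V j. \<integral>x. v x * indicator (A j p) x * yv p f \<partial>M)"
    by (rule Bochner_Integration.integral_sum) (use ii in auto)
  also have "\<dots> = (\<Sum>p\<in>V j. (\<integral>x. v x * indicator (A j p) x \<partial>M) * yv p f)"
    by simp
  finally show "(\<Sum>p\<in>V j. (\<integral>x. v x * indicator (A j p) x \<partial>M) * yv p f)
      = (\<integral>x. v x * complex_of_real (t (Suc j) x f - t j x f) \<partial>M)" by simp
qed

lemma sum_BJ_v:
  fixes v :: "'a \<Rightarrow> complex"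
  assumes cv: "continuous_on UNIV v"
  shows "(\<Sum>n\<in>BJ J. phi n v * yn n f) = (\<integral>x. v x * complex_of_real (s (Nj J) x f) \<partial>M)"
proof -
  have "(\<Sum>n\<in>BJ J. phi n v * yn n f)
      = (\<Sum>n\<in>BJ J. (\<integral>x. v x * indicator (A (jj n) (pc n)) x \<partial>M) * yv (pc n) f)"
    by (rule sum.cong) (auto simp: BJ_iff phi_def yn_def)
  also have "\<dots> = (\<Sum>j\<le>J. \<Sum>p\<in>V j. (\<integral>x. v x * indicator (A j p) x \<partial>M) * yv p f)"
    by (rule sum_BJ)
  also have "\<dots> = (\<Sum>j\<le>J. \<integral>x. v x * complex_of_real (t (Suc j) x f - t j x f) \<partial>M)"
    by (simp add: block_v[OF cv])
  also have "\<dots> = (\<integral>x. (\<Sum>j\<le>J. v x * complex_of_real (t (Suc j) x f - t j x f)) \<partial>M)"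
    by (rule Bochner_Integration.integral_sum[symmetric]) (use block_v(2)[OF cv] in auto)
  also have "\<dots> = (\<integral>x. v x * complex_of_real (s (Nj J) x f) \<partial>M)"
  proof (rule Bochner_Integration.integral_cong[OF refl])
    fix x
    have "(\<Sum>j\<le>J. t (Suc j) x f - t j x f) = (\<Sum>j<Suc J. t (Suc j) x f - t j x f)"
      by (simp add: lessThan_Suc_atMost)
    also have "\<dots> = t (Suc J) x f - t 0 x f" by (rule sum_lessThan_telescope)
    also have "\<dots> = s (Nj J) x f" by (simp add: t_def)
    finally have tel: "(\<Sum>j\<le>J. t (Suc j) x f - t j x f) = s (Nj J) x f" .
    show "(\<Sum>j\<le>J. v x * complex_of_real (t (Suc j) x f - t j x f)) = v x * complex_of_real (s (Nj J) x f)"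
      unfolding tel[symmetric] by (simp add: sum_distrib_left)
  qed
  finally show ?thesis .
qed

end

lemma L2_sum_cmod:
  fixes a :: "'n \<Rightarrow> 'f \<Rightarrow> complex"
  assumes "finite Q"
  shows "L2_set (\<lambda>f. cmod (\<Sum>n\<in>Q. a n f)) H \<le> (\<Sum>n\<in>Q. L2_set (\<lambda>f. cmod (a n f)) H)"
  using assms
proof (induction Q rule: finite_induct)
  case empty then show ?case by (simp add: L2_set_def)
next
  case (insert q Q)
  have "L2_set (\<lambda>f. cmod (\<Sum>n\<in>insert q Q. a n f)) H = L2_set (\<lambda>f. cmod (a q f + (\<Sum>n\<in>Q. a n f))) H"
    using insert by simp
  also have "\<dots> \<le> L2_set (\<lambda>f. cmod (a q f) + cmod (\<Sum>n\<in>Q. a n f)) H"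
    by (rule L2_set_mono) (auto intro: norm_triangle_ineq)
  also have "\<dots> \<le> L2_set (\<lambda>f. cmod (a q f)) H + L2_set (\<lambda>f. cmod (\<Sum>n\<in>Q. a n f)) H"
    by (rule L2_set_triangle_ineq)
  also have "\<dots> \<le> L2_set (\<lambda>f. cmod (a q f)) H + (\<Sum>n\<in>Q. L2_set (\<lambda>f. cmod (a n f)) H)"
    using insert by simp
  finally show ?case using insert by simp
qed

lemma L2_le_l2_norm:
  fixes y :: "'f \<Rightarrow> complex"
  assumes "y \<in> l2" "finite H"
  shows "L2_set (\<lambda>f. cmod (y f)) H \<le> l2_norm y"
proof -
  have "(\<Sum>f\<in>H. (cmod (y f))\<^sup>2) \<le> infsum (\<lambda>f. (cmod (y f))\<^sup>2) UNIV"
    by (rule finite_sum_le_infsum) (use assms in \<open>auto simp: l2_def\<close>)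
  then show ?thesis unfolding L2_set_def l2_norm_def by (rule real_sqrt_le_mono)
qed

lemma L2_cmod_mult: "L2_set (\<lambda>f. cmod (c * y f)) H = cmod c * L2_set (\<lambda>f. cmod (y f)) H"
  by (simp add: norm_mult L2_set_right_distrib)

lemma rnd_abs: "\<bar>rnd N t\<bar> \<le> \<bar>t\<bar> + 1"
proof (cases "\<bar>t\<bar> \<le> real (Suc N)")
  case True
  have "\<bar>t - rnd N t\<bar> \<le> 1 / real (Suc N)" by (rule rnd_err[OF True])
  also have "\<dots> \<le> 1" by simp
  finally show ?thesis by linarith
next
  case False then show ?thesis unfolding rnd_def by simp
qed

context tsetup begin

lemma mass_nonneg: "mass j \<ge> 0"
  unfolding mass_def by (intro sum_nonneg mult_nonneg_nonneg) auto

lemma mass_Suc: "mass (Suc i) \<le> 2 * (1/2)^i"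
proof -
  define U where "U x = rho (Nj (Suc i)) x + rho (Nj i) x + R (Nj i) x" for x
  have NN: "Nj i \<le> Nj (Suc i)" by (rule Nj_mono) simp
  have "mass (Suc i) = (\<integral>x. L2_set (\<lambda>f. t (Suc (Suc i)) x f - t (Suc i) x f) (SS (Suc i)) \<partial>M)"
    unfolding mass_def by (rule block_mass)
  also have "\<dots> \<le> (\<integral>x. U x \<partial>M)"
  proof (rule integral_mono_AE')
    show "integrable M U" unfolding U_def using int_rho int_R by simp
    show "AE x in M. L2_set (\<lambda>f. t (Suc (Suc i)) x f - t (Suc i) x f) (SS (Suc i)) \<le> U x"
      using AE_goodx by eventually_elim (unfold t_Suc SS_def U_def, rule s_diff[OF NN])
    show "AE x in M. 0 \<le> U x"
      using AE_goodx by eventually_elim (auto simp: U_def rho_nonneg intro!: add_nonneg_nonneg R_nonneg)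
  qed
  also have "\<dots> = (\<integral>x. rho (Nj (Suc i)) x \<partial>M) + (\<integral>x. rho (Nj i) x \<partial>M) + (\<integral>x. R (Nj i) x \<partial>M)"
    unfolding U_def using int_rho int_R by simp
  also have "\<dots> \<le> delta (Nj (Suc i)) + delta (Nj i)"
  proof -
    have "(\<integral>x. R (Nj (Suc i)) x \<partial>M) \<ge> 0"
      by (intro integral_nonneg_AE) (use AE_goodx in \<open>auto elim!: eventually_mono intro: R_nonneg\<close>)
    then show ?thesis unfolding delta_def by simp
  qed
  also have "\<dots> \<le> (1/2)^(Suc i) + (1/2)^i"
  proof -
    have "delta (Nj j) \<le> (1/2)^j" for j by (rule Nj_prop) simp
    then show ?thesis by (metis add_mono)
  qed
  also have "\<dots> \<le> 2 * (1/2)^i" by simp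
  finally show ?thesis .
qed

definition gn where "gn n = cn n * l2_norm (yn n)"

lemma cn_nonneg: "cn n \<ge> 0" unfolding cn_def by auto
lemma l2_norm_nonneg: "l2_norm y \<ge> 0" unfolding l2_norm_def by (simp add: infsum_nonneg)
lemma gn_nonneg: "gn n \<ge> 0" unfolding gn_def by (intro mult_nonneg_nonneg cn_nonneg l2_norm_nonneg)

lemma gn_partial: "(\<Sum>n<N. gn n) \<le> mass 0 + 8"
proof -
  have "(\<Sum>n<N. gn n) = (\<Sum>n\<in>{..<N} \<inter> Collect valid. gn n)"
    by (rule sum.mono_neutral_right) (auto simp: gn_def cn_def)
  also have "\<dots> \<le> (\<Sum>n\<in>BJ N. gn n)"
  proof (rule sum_mono2[OF BJ_fin])
    show "{..<N} \<inter> Collect valid \<subseteq> BJ N" by (auto simp: BJ_iff) (meson jj_le le_trans less_imp_le)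
  qed (rule gn_nonneg)
  also have "\<dots> = (\<Sum>j\<le>N. mass j)" unfolding gn_def by (rule sum_BJ_mass)
  also have "\<dots> \<le> (\<Sum>j\<le>N. (if j = 0 then mass 0 else 0) + 4 * (1/2)^j)"
  proof (rule sum_mono)
    fix j
    show "mass j \<le> (if j = 0 then mass 0 else 0) + 4 * (1/2)^j"
    proof (cases j)
      case 0 then show ?thesis by simp
    next
      case (Suc i) then show ?thesis using mass_Suc[of i] by simp
    qed
  qed
  also have "\<dots> = mass 0 + 4 * (\<Sum>j<Suc N. (1/2::real)^j)"
    by (simp add: sum.distrib sum_distrib_left lessThan_Suc_atMost)
  also have "\<dots> \<le> mass 0 + 8"
  proof -
    have "(\<Sum>j<Suc N. (1/2::real)^j) = ((1/2)^Suc N - 1) / (1/2 - 1)" by (rule geometric_sum) simp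
    also have "\<dots> \<le> 2" by (simp add: field_simps)
    finally show ?thesis by simp
  qed
  finally show ?thesis .
qed

lemma gn_summable: "summable gn"
  by (rule summableI_nonneg_bounded[OF gn_nonneg gn_partial])

lemma phi_lin:
  fixes v w :: "'a \<Rightarrow> complex"
  assumes "continuous_on UNIV v" "continuous_on UNIV w"
  shows "phi n (\<lambda>x. a * v x + w x) = a * phi n v + phi n w"
proof (cases "valid n")
  case True
  have iv: "integrable M (\<lambda>x. v x * indicator (A (jj n) (pc n)) x)" by (rule int_v_ind[OF assms(1)])
  have iw: "integrable M (\<lambda>x. w x * indicator (A (jj n) (pc n)) x)" by (rule int_v_ind[OF assms(2)])
  have "(\<integral>x. (a * v x + w x) * indicator (A (jj n) (pc n)) x \<partial>M)
      = (\<integral>x. a * (v x * indicator (A (jj n) (pc n)) x) + w x * indicator (A (jj n) (pc n)) x \<partial>M)"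
    by (simp add: algebra_simps)
  also have "\<dots> = a * (\<integral>x. v x * indicator (A (jj n) (pc n)) x \<partial>M) + (\<integral>x. w x * indicator (A (jj n) (pc n)) x \<partial>M)"
    using iv iw by simp
  finally show ?thesis using True unfolding phi_def by simp
next
  case False then show ?thesis unfolding phi_def by simp
qed

lemma phi_bound:
  fixes v :: "'a \<Rightarrow> complex"
  assumes cv: "continuous_on UNIV v"
  shows "cmod (phi n v) \<le> cn n * sup_norm v"
proof (cases "valid n")
  case True
  define B where "B = A (jj n) (pc n)"
  have sB: "B \<in> sets M" unfolding B_def by (rule sets_A)
  interpret prob_space M by (rule prob)
  have "cmod (\<integral>x. v x * indicator B x \<partial>M) \<le> (\<integral>x. cmod (v x * indicator B x) \<partial>M)"
    by (rule integral_norm_bound)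
  also have "\<dots> \<le> (\<integral>x. sup_norm v * indicator B x \<partial>M)"
  proof (rule integral_mono)
    show "integrable M (\<lambda>x. cmod (v x * indicator B x))"
      unfolding B_def by (rule integrable_norm[OF int_v_ind[OF cv]])
    show "integrable M (\<lambda>x. sup_norm v * indicator B x)"
      using sB by (simp add: integrable_indicator_iff sets.Int_space_eq2 less_top[symmetric])
    fix x show "cmod (v x * indicator B x) \<le> sup_norm v * indicator B x"
      using sup_norm_bound[OF cv, of x] by (simp add: indicator_def norm_mult)
  qed
  also have "\<dots> = sup_norm v * Sigma_Algebra.measure M B" using sB by (simp add: sets.Int_space_eq2)
  finally show ?thesis using True unfolding phi_def cn_def B_def by (simp add: ac_simps)
next
  case False
  then show ?thesis unfolding phi_def cn_def by simp
qed

lemma int_s: "integrable M (\<lambda>x. s N x f)"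
proof -
  interpret prob_space M by (rule prob)
  show ?thesis
  proof (rule Bochner_Integration.integrable_bound[of _ "\<lambda>x. \<bar>k f x\<bar> + 1"])
    show "integrable M (\<lambda>x. \<bar>k f x\<bar> + 1)" using int_k[of f] by simp
    show "(\<lambda>x. s N x f) \<in> borel_measurable M" by measurable
    show "AE x in M. norm (s N x f) \<le> norm (\<bar>k f x\<bar> + 1)"
      by (rule AE_I2) (auto simp: s_def rnd_abs)
  qed
qed

lemma Tk_minus_Ts:
  fixes v :: "'a \<Rightarrow> complex"
  assumes cv: "continuous_on UNIV v" and H: "finite H"
  shows "(\<Sum>f\<in>H. (cmod (Tk M k v f - (\<integral>x. v x * complex_of_real (s N x f) \<partial>M)))\<^sup>2) \<le> (sup_norm v * delta N)\<^sup>2"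
proof -
  have mv: "v \<in> borel_measurable M" by (rule meas_cont[OF cv])
  have ik: "integrable M (\<lambda>x. v x * complex_of_real (k f x))" for f by (rule int_vk[OF cv])
  have is': "integrable M (\<lambda>x. v x * complex_of_real (s N x f))" for f
    by (rule int_vg[OF mv sup_norm_bound[OF cv] int_s]) measurable
  have eq: "Tk M k v f - (\<integral>x. v x * complex_of_real (s N x f) \<partial>M) = (\<integral>x. v x * complex_of_real (k f x - s N x f) \<partial>M)" for f
  proof -
    have "(\<integral>x. v x * complex_of_real (k f x - s N x f) \<partial>M)
        = (\<integral>x. v x * complex_of_real (k f x) - v x * complex_of_real (s N x f) \<partial>M)"
      by (simp add: algebra_simps)
    also have "\<dots> = Tk M k v f - (\<integral>x. v x * complex_of_real (s N x f) \<partial>M)"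
      unfolding Tk_def by (rule Bochner_Integration.integral_diff[OF ik is'])
    finally show ?thesis by simp
  qed
  have iG: "integrable M (\<lambda>x. cmod (v x) * (rho N x + R N x))"
  proof (rule Bochner_Integration.integrable_bound[of _ "\<lambda>x. sup_norm v * (rho N x + R N x)"])
    show "integrable M (\<lambda>x. sup_norm v * (rho N x + R N x))" using int_rho int_R by simp
    show "(\<lambda>x. cmod (v x) * (rho N x + R N x)) \<in> borel_measurable M" using mv by measurable
    show "AE x in M. norm (cmod (v x) * (rho N x + R N x)) \<le> norm (sup_norm v * (rho N x + R N x))"
      using AE_goodx
    proof eventually_elim
      case (elim x)
      have G0: "rho N x + R N x \<ge> 0" using rho_nonneg R_nonneg[OF elim] by (simp add: add_nonneg_nonneg)
      have "cmod (v x) * (rho N x + R N x) \<le> sup_norm v * (rho N x + R N x)"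
        by (rule mult_right_mono[OF sup_norm_bound[OF cv] G0])
      then show ?case using G0 sup_norm_nonneg[OF cv] by (simp add: abs_mult)
    qed
  qed
  have "(\<Sum>f\<in>H. (cmod (Tk M k v f - (\<integral>x. v x * complex_of_real (s N x f) \<partial>M)))\<^sup>2)
      = (\<Sum>f\<in>H. (cmod (\<integral>x. v x * complex_of_real (k f x - s N x f) \<partial>M))\<^sup>2)" by (simp only: eq)
  also have "\<dots> \<le> (\<integral>x. cmod (v x) * (rho N x + R N x) \<partial>M)\<^sup>2"
  proof (rule est[OF H])
    show "\<And>f. f \<in> H \<Longrightarrow> integrable M (\<lambda>x. v x * complex_of_real (k f x - s N x f))"
      using ik is' by (simp add: algebra_simps)
    show "integrable M (\<lambda>x. cmod (v x) * (rho N x + R N x))" by (rule iG)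
    show "AE x in M. L2_set (\<lambda>f. k f x - s N x f) H \<le> rho N x + R N x" by (rule k_minus_s[OF H])
  qed
  also have "\<dots> \<le> (sup_norm v * delta N)\<^sup>2"
  proof (rule power_mono)
    show "0 \<le> (\<integral>x. cmod (v x) * (rho N x + R N x) \<partial>M)"
      using AE_goodx by (intro integral_nonneg_AE) (auto elim!: eventually_mono intro!: mult_nonneg_nonneg add_nonneg_nonneg R_nonneg rho_nonneg)
    have "(\<integral>x. cmod (v x) * (rho N x + R N x) \<partial>M) \<le> (\<integral>x. sup_norm v * (rho N x + R N x) \<partial>M)"
    proof (rule integral_mono_AE[OF iG])
      show "integrable M (\<lambda>x. sup_norm v * (rho N x + R N x))" using int_rho int_R by simp
      show "AE x in M. cmod (v x) * (rho N x + R N x) \<le> sup_norm v * (rho N x + R N x)"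
        using AE_goodx by eventually_elim (rule mult_right_mono[OF sup_norm_bound[OF cv]], simp add: add_nonneg_nonneg rho_nonneg R_nonneg)
    qed
    also have "\<dots> = sup_norm v * delta N" unfolding delta_def using int_rho int_R by simp
    finally show "(\<integral>x. cmod (v x) * (rho N x + R N x) \<partial>M) \<le> sup_norm v * delta N" .
  qed
  finally show ?thesis .
qed

end

context tsetup begin

lemma tail_bound:
  assumes "Q \<subseteq> {..<N}" "\<And>n. n \<in> Q \<Longrightarrow> gn n \<noteq> 0 \<Longrightarrow> J \<le> n"
  shows "(\<Sum>n\<in>Q. gn n) \<le> (\<Sum>i. gn (i + J))"
proof -
  have fQ: "finite Q" using assms(1) finite_subset by blast
  have "(\<Sum>n\<in>Q. gn n) = (\<Sum>n\<in>Q \<inter> {J..<N}. gn n)"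
    by (rule sum.mono_neutral_right[OF fQ]) (use assms in \<open>auto simp: not_le\<close>)
  also have "\<dots> \<le> (\<Sum>n\<in>{J..<N}. gn n)" by (rule sum_mono2) (auto simp: gn_nonneg)
  also have "\<dots> = (\<Sum>i\<in>{..<N - J}. gn (i + J))"
  proof (cases "J \<le> N")
    case True
    have "{J..<N} = (\<lambda>i. i + J) ` {..<N - J}"
    proof
      show "{J..<N} \<subseteq> (\<lambda>i. i + J) ` {..<N - J}"
      proof
        fix x assume "x \<in> {J..<N}"
        then show "x \<in> (\<lambda>i. i + J) ` {..<N - J}" by (intro image_eqI[of _ _ "x - J"]) auto
      qed
    qed auto
    then show ?thesis by (simp add: sum.reindex)
  next
    case False then show ?thesis by simp
  qed
  also have "\<dots> \<le> (\<Sum>i. gn (i + J))"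
    by (rule sum_le_suminf) (use gn_summable in \<open>auto simp: summable_iff_shift gn_nonneg\<close>)
  finally show ?thesis .
qed

lemma conv:
  fixes v :: "'a \<Rightarrow> complex"
  assumes cv: "continuous_on UNIV v"
  shows "(\<lambda>N. l2_norm (\<lambda>f. Tk M k v f - (\<Sum>n<N. phi n v * yn n f))) \<longlonglongrightarrow> 0"
proof (rule metric_LIMSEQ_I)
  fix r :: real assume r: "r > 0"
  define B where "B = sup_norm v"
  have B0: "B \<ge> 0" unfolding B_def by (rule sup_norm_nonneg[OF cv])
  have "(\<lambda>J. B * (1/2)^J + B * (\<Sum>i. gn (i + J))) \<longlonglongrightarrow> B * 0 + B * 0"
    by (intro tendsto_intros suminf_exist_split2 gn_summable) simp
  then have "eventually (\<lambda>J. B * (1/2)^J + B * (\<Sum>i. gn (i + J)) < r / 2) sequentially"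
    by (rule order_tendstoD(2)) (use r in simp)
  then obtain J where J: "B * (1/2)^J + B * (\<Sum>i. gn (i + J)) < r / 2"
    unfolding eventually_sequentially by blast
  define N0 where "N0 = Suc (Max (insert 0 (BJ J)))"
  show "\<exists>no. \<forall>N\<ge>no. dist (l2_norm (\<lambda>f. Tk M k v f - (\<Sum>n<N. phi n v * yn n f))) 0 < r"
  proof (intro exI allI impI)
    fix N assume N: "N \<ge> N0"
    have sub: "BJ J \<subseteq> {..<N}"
    proof
      fix n assume "n \<in> BJ J"
      then have "n \<le> Max (insert 0 (BJ J))" using BJ_fin by simp
      then show "n \<in> {..<N}" using N unfolding N0_def by simp
    qed
    define Q where "Q = {..<N} - BJ J"
    define E where "E f = Tk M k v f - (\<Sum>n<N. phi n v * yn n f)" for f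
    define Ts where "Ts f = (\<integral>x. v x * complex_of_real (s (Nj J) x f) \<partial>M)" for f
    have Esplit: "E f = (Tk M k v f - Ts f) - (\<Sum>n\<in>Q. phi n v * yn n f)" for f
    proof -
      have "(\<Sum>n<N. phi n v * yn n f) = (\<Sum>n\<in>Q. phi n v * yn n f) + (\<Sum>n\<in>BJ J. phi n v * yn n f)"
        unfolding Q_def by (rule sum.subset_diff[OF sub]) simp
      then show ?thesis unfolding E_def Ts_def sum_BJ_v[OF cv] by simp
    qed
    have Hb: "L2_set (\<lambda>f. cmod (E f)) H \<le> r / 2" if H: "finite H" for H
    proof -
      have "L2_set (\<lambda>f. cmod (E f)) H \<le> L2_set (\<lambda>f. cmod (Tk M k v f - Ts f) + cmod (\<Sum>n\<in>Q. phi n v * yn n f)) H"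
        unfolding Esplit by (rule L2_set_mono) (auto intro: norm_triangle_ineq4)
      also have "\<dots> \<le> L2_set (\<lambda>f. cmod (Tk M k v f - Ts f)) H + L2_set (\<lambda>f. cmod (\<Sum>n\<in>Q. phi n v * yn n f)) H"
        by (rule L2_set_triangle_ineq)
      also have "L2_set (\<lambda>f. cmod (Tk M k v f - Ts f)) H \<le> B * (1/2)^J"
      proof -
        have "L2_set (\<lambda>f. cmod (Tk M k v f - Ts f)) H \<le> sqrt ((B * delta (Nj J))\<^sup>2)"
          unfolding Ts_def B_def by (rule L2_le_sqrt[OF Tk_minus_Ts[OF cv H]])
        also have "\<dots> = B * delta (Nj J)" using B0 delta_nonneg by simp
        also have "\<dots> \<le> B * (1/2)^J" using B0 by (intro mult_left_mono Nj_prop) auto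
        finally show ?thesis .
      qed
      also have "L2_set (\<lambda>f. cmod (\<Sum>n\<in>Q. phi n v * yn n f)) H \<le> B * (\<Sum>i. gn (i + J))"
      proof -
        have fQ: "finite Q" unfolding Q_def by simp
        have "L2_set (\<lambda>f. cmod (\<Sum>n\<in>Q. phi n v * yn n f)) H \<le> (\<Sum>n\<in>Q. L2_set (\<lambda>f. cmod (phi n v * yn n f)) H)"
          by (rule L2_sum_cmod[OF fQ])
        also have "\<dots> \<le> (\<Sum>n\<in>Q. B * gn n)"
        proof (rule sum_mono)
          fix n
          have "L2_set (\<lambda>f. cmod (phi n v * yn n f)) H = cmod (phi n v) * L2_set (\<lambda>f. cmod (yn n f)) H"
            by (rule L2_cmod_mult)
          also have "\<dots> \<le> (cn n * B) * l2_norm (yn n)"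
            using phi_bound[OF cv, of n] L2_le_l2_norm[OF yn_l2 H, of n] B_def
            by (intro mult_mono) (auto simp: L2_set_nonneg cn_nonneg B0 sup_norm_nonneg[OF cv])
          also have "\<dots> = B * gn n" unfolding gn_def by simp
          finally show "L2_set (\<lambda>f. cmod (phi n v * yn n f)) H \<le> B * gn n" .
        qed
        also have "\<dots> = B * (\<Sum>n\<in>Q. gn n)" by (simp add: sum_distrib_left)
        also have "\<dots> \<le> B * (\<Sum>i. gn (i + J))"
        proof (rule mult_left_mono[OF tail_bound B0])
          show "Q \<subseteq> {..<N}" unfolding Q_def by auto
          fix n assume n: "n \<in> Q" "gn n \<noteq> 0"
          then have "valid n" unfolding gn_def cn_def by (auto split: if_splits)
          then have "jj n > J" using n unfolding Q_def by (auto simp: BJ_iff)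
          then show "J \<le> n" using jj_le[of n] by simp
        qed
        finally show ?thesis .
      qed
      finally show ?thesis using J by simp
    qed
    have "l2_norm E \<le> sqrt ((r/2)\<^sup>2)"
    proof (rule l2_finsums(3))
      fix H :: "'f set" assume H: "finite H"
      have "(\<Sum>f\<in>H. (cmod (E f))\<^sup>2) = (L2_set (\<lambda>f. cmod (E f)) H)\<^sup>2"
        unfolding L2_set_def by (simp add: sum_nonneg)
      also have "\<dots> \<le> (r/2)\<^sup>2" using Hb[OF H] by (intro power_mono) (auto simp: L2_set_nonneg)
      finally show "(\<Sum>f\<in>H. (cmod (E f))\<^sup>2) \<le> (r/2)\<^sup>2" .
    qed
    also have "\<dots> = r / 2" using r by simp
    finally have "l2_norm E < r" using r by simp
    then show "dist (l2_norm (\<lambda>f. Tk M k v f - (\<Sum>n<N. phi n v * yn n f))) 0 < r"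
      unfolding E_def[symmetric] using l2_norm_nonneg[of E] by (simp add: E_def[abs_def])
  qed
qed

lemma nuclear: "nuclear_CX (Tk M k)"
  unfolding nuclear_CX_def
proof (intro conjI allI impI exI)
  show "\<And>v. continuous_on UNIV v \<Longrightarrow> Tk M k v \<in> l2" by (rule Tk_l2)
  show "\<And>n (v :: 'a \<Rightarrow> complex) w a. continuous_on UNIV v \<and> continuous_on UNIV w \<Longrightarrow> phi n (\<lambda>x. a * v x + w x) = a * phi n v + phi n w"
    by (simp add: phi_lin)
  show "\<And>n v. continuous_on UNIV v \<Longrightarrow> cmod (phi n v) \<le> cn n * sup_norm v" by (rule phi_bound)
  show "\<And>n. 0 \<le> cn n" by (rule cn_nonneg)
  show "\<And>n. yn n \<in> l2" by (rule yn_l2)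
  show "summable (\<lambda>n. cn n * l2_norm (yn n))" using gn_summable unfolding gn_def .
  show "\<And>v. continuous_on UNIV v \<Longrightarrow> (\<lambda>N. l2_norm (\<lambda>f. Tk M k v f - (\<Sum>n<N. phi n v * yn n f))) \<longlonglongrightarrow> 0"
    by (rule conv)
qed

end

theorem mainTheorem14:
  fixes M :: "'a::t2_space measure"
    and e :: 'f
    and k :: "'f \<Rightarrow> 'a \<Rightarrow> real"
  assumes X_compact: "compact (UNIV :: 'a set)"
    and radon: "radon_prob M"
    and supp: "unital_H_support_L2 M e k"
    and ke_nonneg: "AE x in M. k e x \<ge> 0"
    and sq_le: "AE x in M. (\<lambda>f. (k f x)\<^sup>2) summable_on (UNIV - {e}) \<and>
                           infsum (\<lambda>f. (k f x)\<^sup>2) (UNIV - {e}) \<le> (k e x)\<^sup>2"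
  shows "(\<forall>n v. (\<forall>i<n. \<forall>j<n. continuous_on UNIV (v i j)) \<and> (\<forall>x. psd_on {..<n} (\<lambda>i j. v i j x))
              \<longrightarrow> max_cone e n (\<lambda>i j. Tk M k (v i j)))
      \<and> Tk M k (\<lambda>_. 1) = basis_vec e
      \<and> (\<forall>v. continuous_on UNIV v \<and> (\<forall>x. Im (v x) = 0 \<and> Re (v x) \<ge> 0)
              \<longrightarrow> Tk M k v \<in> herm_cone e)
      \<and> nuclear_CX (Tk M k)
      \<and> (let \<mu>' = density M (\<lambda>x. ennreal (k e x));
             k' = (\<lambda>f. if f = e then (\<lambda>_. 1) else (\<lambda>x. k f x / k e x))
         in prob_space \<mu>' \<and> H_support_on_X \<mu>' e k' \<and>
            (\<forall>v f. continuous_on UNIV v \<longrightarrow>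
               Tk M k v f = (\<integral>x. v x * complex_of_real (k' f x) \<partial>\<mu>')))"
proof -
  interpret tsetup M e k
    by unfold_locales (rule X_compact radon supp ke_nonneg sq_le)+
  have p1: "\<forall>n v. (\<forall>i<n. \<forall>j<n. continuous_on UNIV (v i j)) \<and> (\<forall>x. psd_on {..<n} (\<lambda>i j. v i j x))
              \<longrightarrow> max_cone e n (\<lambda>i j. Tk M k (v i j))"
    using Tk_max_cone by blast
  have p3: "\<forall>v. continuous_on UNIV v \<and> (\<forall>x. Im (v x) = 0 \<and> Re (v x) \<ge> 0) \<longrightarrow> Tk M k v \<in> herm_cone e"
    using Tk_cone by blast
  have p5: "\<forall>v f. continuous_on UNIV v \<longrightarrow> Tk M k v f = (\<integral>x. v x * complex_of_real (k' f x) \<partial>mu')"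
    using Tk_dens by blast
  show ?thesis
    unfolding Let_def using p1 Tk_one p3 nuclear prob' H_support' p5 unfolding mu'_def k'_def by simp
qed

end
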